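(* Let $G$ be a connected $m$-uniform hypergraph and let $H$ be a connected spanning sub-hypergraph of $G$ (same vertex set, edge set a subset of that of $G$). Then $s(G)\mid s(H)$ and $\gamma(G)\le\gamma(H)$.
   Context: For an $m$-uniform hypergraph $G$ on vertices $v_1,\dots,v_n$, the adjacency tensor $\mathcal{A}(G)$ is the order-$m$, dimension-$n$ tensor with $a_{i_1\cdots i_m}=\frac1{(m-1)!}$ if $\{v_{i_1},\dots,v_{i_m}\}$ is an edge and $0$ otherwise. For a tensor $\mathcal{A}$: eigenvectors $\mathcal{A}x^{m-1}=\lambda x^{[m-1]}$, $x\ne0$, $(\mathcal{A}x^{m-1})_i=\sum a_{ii_2\cdots i_m}x_{i_2}\cdots x_{i_m}$; $\rho(\mathcal{A})$ spectral radius. Stabilizing index $s(\mathcal{A})$: number of invertible diagonal $D$ with $d_{11}=1$ and $\mathcal{A}=D^{-(m-1)}\mathcal{A}D$, $(D^{-(m-1)}\mathcal{A}D)_{i_1\cdots i_m}=d_{i_1}^{-(m-1)}a_{i_1\cdots i_m}d_{i_2}\cdots d_{i_m}$. Stabilizing dimension $\gamma(\mathcal{A})$: composition length of the $\mathbb{Z}_m$-module of eigenvectors $y$ for $\rho(\mathcal{A})$ normalized by $y_1=1$ (no zero entries for connected hypergraphs), with operation $y\circ\hat y=D_yD_{\hat y}v_p$, $D_y=\mathrm{diag}(y_i/|y_i|)$, $v_p$ the positive one. $s(G)=s(\mathcal{A}(G))$, $\gamma(G)=\gamma(\mathcal{A}(G))$. *)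

theory Defs
  imports Complex_Main "HOL-Algebra.Algebra"
begin

text \<open>Vertices v_1,...,v_n are represented by 0,...,n-1 (so v_1 is 0).
  A hypergraph is given by n and its edge set E (a set of vertex sets).\<close>

definition uniform_hypergraph :: "nat \<Rightarrow> nat \<Rightarrow> nat set set \<Rightarrow> bool" where
  "uniform_hypergraph m n E \<longleftrightarrow> (\<forall>e\<in>E. e \<subseteq> {..<n} \<and> card e = m)"

definition hg_connected :: "nat \<Rightarrow> nat set set \<Rightarrow> bool" where
  "hg_connected n E \<longleftrightarrow>
     (\<forall>u<n. \<forall>v<n. (u, v) \<in> ({(x, y). \<exists>e\<in>E. x \<in> e \<and> y \<in> e})\<^sup>*)"

text \<open>A tensor is a function on index lists; only lists of length m with
  entries < n are meaningful. Vectors are functions nat => complex that vanish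
  outside {0..<n}.\<close>

type_synonym tensor = "nat list \<Rightarrow> complex"
type_synonym cvec = "nat \<Rightarrow> complex"

definition tensor_indices :: "nat \<Rightarrow> nat \<Rightarrow> nat list set" where
  "tensor_indices k n = {is. length is = k \<and> set is \<subseteq> {..<n}}"

definition is_vec :: "nat \<Rightarrow> cvec \<Rightarrow> bool" where
  "is_vec n x \<longleftrightarrow> (\<forall>i\<ge>n. x i = 0)"

definition adj_tensor :: "nat \<Rightarrow> nat set set \<Rightarrow> tensor" where
  "adj_tensor m E = (\<lambda>is. if length is = m \<and> set is \<in> E
                           then 1 / of_nat (fact (m - 1)) else 0)"

definition tensor_apply :: "nat \<Rightarrow> nat \<Rightarrow> tensor \<Rightarrow> cvec \<Rightarrow> nat \<Rightarrow> complex" where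
  "tensor_apply m n A x i =
     (\<Sum>js\<in>tensor_indices (m - 1) n. A (i # js) * prod_list (map x js))"

definition tensor_eigenpair :: "nat \<Rightarrow> nat \<Rightarrow> tensor \<Rightarrow> complex \<Rightarrow> cvec \<Rightarrow> bool" where
  "tensor_eigenpair m n A lam x \<longleftrightarrow> is_vec n x \<and> (\<exists>i<n. x i \<noteq> 0) \<and>
     (\<forall>i<n. tensor_apply m n A x i = lam * x i ^ (m - 1))"

definition spectral_radius :: "nat \<Rightarrow> nat \<Rightarrow> tensor \<Rightarrow> real" where
  "spectral_radius m n A = Sup {cmod lam | lam. \<exists>x. tensor_eigenpair m n A lam x}"

text \<open>An invertible diagonal matrix D = diag(d_1..d_n) is represented by d with
  d i \<noteq> 0 for i < n, padded by d i = 1 for i \<ge> n (so distinct matrices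
  correspond to distinct functions).\<close>

definition diag_stabilizes :: "nat \<Rightarrow> nat \<Rightarrow> tensor \<Rightarrow> cvec \<Rightarrow> bool" where
  "diag_stabilizes m n A d \<longleftrightarrow>
     (\<forall>is\<in>tensor_indices m n.
        inverse (d (hd is) ^ (m - 1)) * A is * prod_list (map d (tl is)) = A is)"

definition stabilizing_index :: "nat \<Rightarrow> nat \<Rightarrow> tensor \<Rightarrow> nat" where
  "stabilizing_index m n A =
     card {d. (\<forall>i<n. d i \<noteq> 0) \<and> (\<forall>i\<ge>n. d i = 1) \<and> d 0 = 1 \<and> diag_stabilizes m n A d}"

definition rho_eigvecs :: "nat \<Rightarrow> nat \<Rightarrow> tensor \<Rightarrow> cvec set" where
  "rho_eigvecs m n A =
     {y. tensor_eigenpair m n A (complex_of_real (spectral_radius m n A)) y \<and> y 0 = 1}"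

definition positive_eigvec :: "nat \<Rightarrow> nat \<Rightarrow> tensor \<Rightarrow> cvec" where
  "positive_eigvec m n A =
     (THE v. v \<in> rho_eigvecs m n A \<and> (\<forall>i<n. Im (v i) = 0 \<and> Re (v i) > 0))"

text \<open>y o y' = D_y D_y' v_p with D_y = diag(y_i/|y_i|); note sgn z = z / |z|.\<close>
definition eigvec_module :: "nat \<Rightarrow> nat \<Rightarrow> tensor \<Rightarrow> cvec monoid" where
  "eigvec_module m n A =
     \<lparr>carrier = rho_eigvecs m n A,
      monoid.mult = (\<lambda>y y' i. sgn (y i) * sgn (y' i) * positive_eigvec m n A i),
      one = positive_eigvec m n A\<rparr>"

definition composition_series :: "('a, 'b) monoid_scheme \<Rightarrow> 'a set list \<Rightarrow> bool" where
  "composition_series G Hs \<longleftrightarrow> Hs \<noteq> [] \<and> hd Hs = {\<one>\<^bsub>G\<^esub>} \<and> last Hs = carrier G \<and>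
     (\<forall>H\<in>set Hs. subgroup H G) \<and>
     (\<forall>i. Suc i < length Hs \<longrightarrow>
        normal (Hs ! i) (G\<lparr>carrier := Hs ! Suc i\<rparr>) \<and>
        simple_group ((G\<lparr>carrier := Hs ! Suc i\<rparr>) Mod (Hs ! i)))"

definition composition_length :: "('a, 'b) monoid_scheme \<Rightarrow> nat" where
  "composition_length G = (LEAST k. \<exists>Hs. composition_series G Hs \<and> length Hs = Suc k)"

definition stabilizing_dimension :: "nat \<Rightarrow> nat \<Rightarrow> tensor \<Rightarrow> nat" where
  "stabilizing_dimension m n A = composition_length (eigvec_module m n A)"

definition hg_stab_index :: "nat \<Rightarrow> nat \<Rightarrow> nat set set \<Rightarrow> nat" where
  "hg_stab_index m n E = stabilizing_index m n (adj_tensor m E)"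

definition hg_stab_dim :: "nat \<Rightarrow> nat \<Rightarrow> nat set set \<Rightarrow> nat" where
  "hg_stab_dim m n E = stabilizing_dimension m n (adj_tensor m E)"

end

theory Submission
  imports Defs "HOL-Analysis.Analysis" "HOL-Combinatorics.Multiset_Permutations"
begin


definition nbr :: "nat set set \<Rightarrow> (nat \<Rightarrow> 'a::comm_ring_1) \<Rightarrow> nat \<Rightarrow> 'a" where
  "nbr E x i = (\<Sum>e\<in>{e\<in>E. i \<in> e}. prod x (e - {i}))"

definition stabset :: "nat \<Rightarrow> nat \<Rightarrow> nat set set \<Rightarrow> (nat \<Rightarrow> complex) set" where
  "stabset m n E = {d. (\<forall>i<n. d i \<noteq> 0) \<and> (\<forall>i\<ge>n. d i = 1) \<and> d 0 = 1 \<and>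
      (\<forall>e\<in>E. \<forall>i\<in>e. prod d (e - {i}) = d i ^ (m - 1))}"

lemma unif_finite:
  assumes "uniform_hypergraph m n E" shows "finite E"
proof -
  have "E \<subseteq> Pow {..<n}" using assms unfolding uniform_hypergraph_def by auto
  then show ?thesis by (rule finite_subset) simp
qed

lemma unif_edge:
  assumes "uniform_hypergraph m n E" "e \<in> E"
  shows "e \<subseteq> {..<n}" "card e = m" "finite e"
  using assms unfolding uniform_hypergraph_def by (auto intro: finite_subset)

lemma tensor_apply_adj:
  fixes x :: "nat \<Rightarrow> complex"
  assumes U: "uniform_hypergraph m n E" and m: "m \<ge> 2" and i: "i < n"
  shows "tensor_apply m n (adj_tensor m E) x i = nbr E x i"
proof -
  define c :: complex where "c = 1 / of_nat (fact (m - 1))"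
  have c0: "c * of_nat (fact (m-1)) = 1" unfolding c_def by simp
  define TI where "TI = tensor_indices (m - 1) n"
  have finTI: "finite TI"
  proof -
    have "TI \<subseteq> {xs. set xs \<subseteq> {..<n} \<and> length xs = m - 1}"
      unfolding TI_def tensor_indices_def by auto
    then show ?thesis using finite_lists_length_eq[of "{..<n}" "m-1"] finite_subset by auto
  qed
  define P where "P = {js\<in>TI. insert i (set js) \<in> E}"
  have "tensor_apply m n (adj_tensor m E) x i =
      (\<Sum>js\<in>TI. (if insert i (set js) \<in> E then c * prod_list (map x js) else 0))"
    unfolding tensor_apply_def adj_tensor_def TI_def c_def
    apply (rule sum.cong[OF refl])
    using m by (auto simp: tensor_indices_def)
  also have "\<dots> = (\<Sum>js\<in>P. c * prod_list (map x js))"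
    unfolding P_def by (simp add: sum.inter_filter[OF finTI, symmetric])
  also have "P = (\<Union>e\<in>{e\<in>E. i\<in>e}. permutations_of_set (e - {i}))"
  proof (intro Set.set_eqI iffI)
    fix js assume "js \<in> P"
    then have js: "length js = m - 1" "set js \<subseteq> {..<n}" "insert i (set js) \<in> E"
      unfolding P_def TI_def tensor_indices_def by auto
    have ce: "card (insert i (set js)) = m" using unif_edge(2)[OF U js(3)] .
    have "card (insert i (set js)) \<le> Suc (card (set js))" by (simp add: card_insert_le_m1)
    moreover have "card (set js) \<le> length js" by (rule card_length)
    moreover have "i \<notin> set js"
    proof
      assume "i \<in> set js"
      then have "card (insert i (set js)) = card (set js)" by (simp add: insert_absorb)
      with ce card_length[of js] js(1) m show False by simp
    qed
    ultimately have "card (set js) = length js" using ce js(1) m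
      by (simp add: card_insert_if)
    then have "distinct js" by (simp add: card_distinct)
    moreover have "set js = insert i (set js) - {i}" using \<open>i \<notin> set js\<close> by simp
    ultimately have "js \<in> permutations_of_set (insert i (set js) - {i})"
      unfolding permutations_of_set_def by simp
    then show "js \<in> (\<Union>e\<in>{e\<in>E. i\<in>e}. permutations_of_set (e - {i}))"
      using js(3) by blast
  next
    fix js assume "js \<in> (\<Union>e\<in>{e\<in>E. i\<in>e}. permutations_of_set (e - {i}))"
    then obtain e where e: "e \<in> E" "i \<in> e" "set js = e - {i}" "distinct js"
      by (auto simp: permutations_of_set_def)
    have "length js = card (e - {i})" using e by (metis distinct_card)
    also have "\<dots> = m - 1" using unif_edge[OF U e(1)] e(2) by simp
    finally have "length js = m - 1" .
    moreover have "insert i (set js) = e" using e by auto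
    moreover have "set js \<subseteq> {..<n}" using unif_edge(1)[OF U e(1)] e(3) by blast
    ultimately show "js \<in> P" unfolding P_def TI_def tensor_indices_def
      using e(1) by simp
  qed
  also have "(\<Sum>js\<in>(\<Union>e\<in>{e\<in>E. i\<in>e}. permutations_of_set (e - {i})). c * prod_list (map x js))
      = (\<Sum>e\<in>{e\<in>E. i\<in>e}. \<Sum>js\<in>permutations_of_set (e - {i}). c * prod_list (map x js))"
  proof (rule sum.UNION_disjoint)
    show "finite {e \<in> E. i \<in> e}" using unif_finite[OF U] by simp
    show "\<forall>e\<in>{e \<in> E. i \<in> e}. finite (permutations_of_set (e - {i}))" by simp
    show "\<forall>e\<in>{e \<in> E. i \<in> e}. \<forall>e'\<in>{e \<in> E. i \<in> e}. e \<noteq> e' \<longrightarrow>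
        permutations_of_set (e - {i}) \<inter> permutations_of_set (e' - {i}) = {}"
      by (auto simp: permutations_of_set_def)
  qed
  also have "\<dots> = nbr E x i"
    unfolding nbr_def
  proof (rule sum.cong[OF refl])
    fix e assume e: "e \<in> {e \<in> E. i \<in> e}"
    have fe: "finite (e - {i})" using unif_edge(3)[OF U] e by auto
    have "(\<Sum>js\<in>permutations_of_set (e - {i}). c * prod_list (map x js))
        = (\<Sum>js\<in>permutations_of_set (e - {i}). c * prod x (e - {i}))"
      proof (rule sum.cong[OF refl])
      fix js assume "js \<in> permutations_of_set (e - {i})"
      then have "distinct js" "set js = e - {i}" by (simp_all add: permutations_of_set_def)
      then have "prod_list (map x js) = prod x (e - {i})"
        by (metis prod.distinct_set_conv_list)
      then show "c * prod_list (map x js) = c * prod x (e - {i})" by simp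
    qed
    also have "\<dots> = of_nat (fact (m - 1)) * c * prod x (e - {i})"
      using fe e unif_edge(2)[OF U] by simp
    also have "\<dots> = prod x (e - {i})" using c0 by (simp add: mult.commute)
    finally show "(\<Sum>js\<in>permutations_of_set (e - {i}). c * prod_list (map x js)) = prod x (e - {i})" .
  qed
  finally show ?thesis .
qed


lemma stab_iff:
  assumes U: "uniform_hypergraph m n E" and m: "m \<ge> 2" and d: "\<forall>i<n. d i \<noteq> 0"
  shows "diag_stabilizes m n (adj_tensor m E) d \<longleftrightarrow>
         (\<forall>e\<in>E. \<forall>i\<in>e. prod d (e - {i}) = d i ^ (m - 1))"
proof
  assume S: "diag_stabilizes m n (adj_tensor m E) d"
  show "\<forall>e\<in>E. \<forall>i\<in>e. prod d (e - {i}) = d i ^ (m - 1)"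
  proof (intro ballI)
    fix e i assume e: "e \<in> E" and i: "i \<in> e"
    have fe: "finite (e - {i})" using unif_edge(3)[OF U e] by simp
    obtain js where js: "set js = e - {i}" "distinct js" using finite_distinct_list[OF fe] by blast
    have "length js = card (e - {i})" using js by (metis distinct_card)
    also have "\<dots> = m - 1" using unif_edge(2)[OF U e] i by simp
    finally have lj: "length js = m - 1" .
    have ein: "e \<subseteq> {..<n}" using unif_edge(1)[OF U e] .
    have ie: "insert i (set js) = e" using js i by auto
    have "i # js \<in> tensor_indices m n" unfolding tensor_indices_def using lj m ein ie by auto
    with S have eq: "inverse (d i ^ (m - 1)) * adj_tensor m E (i # js) * prod_list (map d js) = adj_tensor m E (i # js)"
      unfolding diag_stabilizes_def by fastforce
    have A: "adj_tensor m E (i # js) = 1 / of_nat (fact (m - 1))"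
      unfolding adj_tensor_def using lj m ie e by simp
    have di: "d i \<noteq> 0" using d ein i by auto
    have pl: "prod_list (map d js) = prod d (e - {i})" using js by (metis prod.distinct_set_conv_list)
    from eq A have "inverse (d i ^ (m - 1)) * prod_list (map d js) = 1"
      by (simp add: field_simps)
    with di pl show "prod d (e - {i}) = d i ^ (m - 1)" by (simp add: field_simps)
  qed
next
  assume C: "\<forall>e\<in>E. \<forall>i\<in>e. prod d (e - {i}) = d i ^ (m - 1)"
  show "diag_stabilizes m n (adj_tensor m E) d"
    unfolding diag_stabilizes_def
  proof
    fix "is" assume "is": "is \<in> tensor_indices m n"
    show "inverse (d (hd is) ^ (m - 1)) * adj_tensor m E is * prod_list (map d (tl is)) = adj_tensor m E is"
    proof (cases "set is \<in> E")
      case False then show ?thesis unfolding adj_tensor_def by simp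
    next
      case True
      have li: "length is = m" using "is" unfolding tensor_indices_def by simp
      then obtain i js where ij: "is = i # js" using m by (cases "is") auto
      have "card (set is) = m" using unif_edge(2)[OF U True] .
      then have dis: "distinct is" using li by (simp add: card_distinct)
      have sj: "set js = set is - {i}" using dis ij by auto
      have ie: "i \<in> set is" using ij by simp
      have pl: "prod_list (map d js) = prod d (set is - {i})"
        using dis ij sj by (metis distinct.simps(2) prod.distinct_set_conv_list)
      have "i < n" using "is" ij unfolding tensor_indices_def by auto
      then have di: "d i \<noteq> 0" using d by simp
      have "prod d (set is - {i}) = d i ^ (m - 1)" using C True ie by blast
      then show ?thesis using ij pl di by (simp add: field_simps)
    qed
  qed
qed

lemma hg_stab_index_eq:
  assumes U: "uniform_hypergraph m n E" and m: "m \<ge> 2"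
  shows "hg_stab_index m n E = card (stabset m n E)"
proof -
  have "{d. (\<forall>i<n. d i \<noteq> 0) \<and> (\<forall>i\<ge>n. d i = 1) \<and> d 0 = 1 \<and> diag_stabilizes m n (adj_tensor m E) d}
      = stabset m n E"
    unfolding stabset_def using stab_iff[OF U m] by blast
  then show ?thesis unfolding hg_stab_index_def stabilizing_index_def by simp
qed

lemma conn_closure:
  assumes C: "hg_connected n E" and k: "k < n" "P k"
    and step: "\<And>e i j. e \<in> E \<Longrightarrow> i \<in> e \<Longrightarrow> j \<in> e \<Longrightarrow> P i \<Longrightarrow> P j"
  shows "\<forall>j<n. P j"
proof (intro allI impI)
  fix j assume "j < n"
  then have "(k, j) \<in> ({(x, y). \<exists>e\<in>E. x \<in> e \<and> y \<in> e})\<^sup>*"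
    using C k unfolding hg_connected_def by blast
  then show "P j"
  proof (induction rule: rtrancl_induct)
    case base then show ?case using k by simp
  next
    case (step y z) then show ?case using assms(4) by blast
  qed
qed

lemma stabset_root:
  assumes U: "uniform_hypergraph m n E" and C: "hg_connected n E" and n: "n \<ge> 1"
    and d: "d \<in> stabset m n E" and m: "m \<ge> 2"
  shows "d i ^ m = 1"
proof (cases "i < n")
  case False then show ?thesis using d unfolding stabset_def by simp
next
  case True
  have edge: "d j ^ m = prod d e" if "e \<in> E" "j \<in> e" for e j
  proof -
    have "prod d e = d j * prod d (e - {j})"
      using unif_edge(3)[OF U that(1)] that(2) by (simp add: prod.remove)
    also have "\<dots> = d j * d j ^ (m - 1)" using d that unfolding stabset_def by simp
    also have "\<dots> = d j ^ m" using m by (metis power_eq_if not_numeral_le_zero le_zero_eq)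
    finally show ?thesis by simp
  qed
  have "\<forall>j<n. d j ^ m = 1"
  proof (rule conn_closure[OF C, of 0])
    show "0 < n" using n by simp
    show "d 0 ^ m = 1" using d unfolding stabset_def by simp
    fix e i j assume "e \<in> E" "i \<in> e" "j \<in> e" "d i ^ m = 1"
    then show "d j ^ m = 1" using edge by metis
  qed
  then show ?thesis using True by simp
qed

lemma stabset_finite:
  assumes U: "uniform_hypergraph m n E" and C: "hg_connected n E" and n: "n \<ge> 1" and m: "m \<ge> 2"
  shows "finite (stabset m n E)"
proof -
  define R where "R = {z::complex. z ^ m = 1}"
  have fR: "finite R" unfolding R_def using m by (intro finite_roots_unity) simp
  have "stabset m n E \<subseteq> (\<lambda>f i. if i < n then f i else 1) ` (PiE {..<n} (\<lambda>_. R))"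
  proof
    fix d assume d: "d \<in> stabset m n E"
    have "d = (\<lambda>i. if i < n then restrict d {..<n} i else 1)"
      using d unfolding stabset_def by (auto simp: fun_eq_iff)
    moreover have "restrict d {..<n} \<in> PiE {..<n} (\<lambda>_. R)"
      using stabset_root[OF U C n d m] unfolding R_def by auto
    ultimately show "d \<in> (\<lambda>f i. if i < n then f i else 1) ` (PiE {..<n} (\<lambda>_. R))" by blast
  qed
  moreover have "finite (PiE {..<n} (\<lambda>_. R))" using fR by (simp add: finite_PiE)
  ultimately show ?thesis by (meson finite_imageI finite_subset)
qed


definition Fh :: "nat set set \<Rightarrow> (nat \<Rightarrow> real) \<Rightarrow> real" where
  "Fh E x = (\<Sum>e\<in>E. prod x e)"

definition Ksph :: "nat \<Rightarrow> nat \<Rightarrow> (nat \<Rightarrow> real) set" where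
  "Ksph m n = {x. (\<forall>i. 0 \<le> x i) \<and> (\<forall>i\<ge>n. x i = 0) \<and> (\<Sum>i<n. x i ^ m) = 1}"

lemma coord_cont: "continuous_on S (\<lambda>x::nat \<Rightarrow> real. x i)"
  by (rule continuous_on_subset[OF continuous_on_product_coordinates]) simp

lemma Ksph_compact:
  assumes m: "m \<ge> 1" shows "compact (Ksph m n)"
proof -
  define B where "B = PiE UNIV (\<lambda>i::nat. if i < n then {0..1::real} else {0})"
  have "compactin (product_topology (\<lambda>i. euclidean) UNIV) B"
    unfolding B_def by (subst compactin_PiE) auto
  then have cB: "compact B" by (simp add: euclidean_product_topology)
  have cl: "closed {x::nat\<Rightarrow>real. (\<Sum>i<n. x i ^ m) = 1}"
    by (rule closed_Collect_eq; intro continuous_intros coord_cont)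
  have "Ksph m n = B \<inter> {x. (\<Sum>i<n. x i ^ m) = 1}"
  proof (intro Set.set_eqI iffI)
    fix x assume x: "x \<in> Ksph m n"
    have "x i \<le> 1" if "i < n" for i
    proof -
      have "x i ^ m \<le> (\<Sum>i<n. x i ^ m)"
        by (rule member_le_sum) (use x that in \<open>auto simp: Ksph_def\<close>)
      then have "x i ^ m \<le> 1" using x by (simp add: Ksph_def)
      then show ?thesis using x m by (simp add: Ksph_def power_le_one_iff)
    qed
    moreover have "x i \<ge> 0" "i \<ge> n \<Longrightarrow> x i = 0" for i using x by (auto simp: Ksph_def)
    ultimately have "\<forall>i. x i \<in> (if i < n then {0..1} else {0})" by simp
    then have "x \<in> B" unfolding B_def by (simp add: PiE_iff)
    then show "x \<in> B \<inter> {x. (\<Sum>i<n. x i ^ m) = 1}" using x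
      unfolding Ksph_def by blast
  next
    fix x assume "x \<in> B \<inter> {x. (\<Sum>i<n. x i ^ m) = 1}"
    then have xB: "\<forall>i. x i \<in> (if i < n then {0..1} else {0})" and xs: "(\<Sum>i<n. x i ^ m) = 1"
      unfolding B_def by (auto simp: PiE_iff)
    have "0 \<le> x i" for i using xB[rule_format, of i] by (cases "i < n") auto
    moreover have "x i = 0" if "i \<ge> n" for i using xB[rule_format, of i] that by simp
    ultimately show "x \<in> Ksph m n" unfolding Ksph_def using xs by blast
  qed
  then show ?thesis using cB cl by auto
qed

lemma Fh_cont: "finite E \<Longrightarrow> continuous_on S (Fh E)"
  unfolding Fh_def by (intro continuous_intros coord_cont)

lemma Fh_nonneg: "(\<forall>i. 0 \<le> x i) \<Longrightarrow> 0 \<le> Fh E x"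
  unfolding Fh_def by (intro sum_nonneg prod_nonneg) auto

lemma Fh_homog:
  assumes U: "uniform_hypergraph m n E" and m: "m \<ge> 2"
    and xmax: "\<forall>z\<in>Ksph m n. Fh E z \<le> Fm"
    and y0: "\<forall>i. 0 \<le> y i" and yn: "\<forall>i\<ge>n. y i = 0" and s: "(\<Sum>i<n. y i ^ m) > 0"
  shows "Fh E y \<le> Fm * (\<Sum>i<n. y i ^ m)"
proof -
  define s where "s = (\<Sum>i<n. y i ^ m)"
  define c where "c = root m s"
  have s0: "s > 0" using assms unfolding s_def by simp
  have c0: "c > 0" unfolding c_def using s0 m by simp
  have cm: "c ^ m = s" unfolding c_def using s0 m by simp
  define z where "z = (\<lambda>i. y i / c)"
  have "(\<Sum>i<n. z i ^ m) = (\<Sum>i<n. y i ^ m / s)" unfolding z_def by (simp add: power_divide cm)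
  also have "\<dots> = 1" using s0 unfolding s_def by (simp add: sum_divide_distrib[symmetric])
  finally have "z \<in> Ksph m n" unfolding Ksph_def z_def using y0 yn c0 by auto
  then have le: "Fh E z \<le> Fm" using xmax by blast
  have "Fh E z = (\<Sum>e\<in>E. prod y e / s)" unfolding Fh_def
  proof (rule sum.cong[OF refl])
    fix e assume e: "e \<in> E"
    have "prod z e = prod y e / prod (\<lambda>_. c) e" unfolding z_def by (rule prod_dividef)
    also have "prod (\<lambda>_. c) e = s" using unif_edge(2)[OF U e] cm by simp
    finally show "prod z e = prod y e / s" .
  qed
  also have "\<dots> = Fh E y / s" unfolding Fh_def by (simp add: sum_divide_distrib)
  finally have "Fh E y / s \<le> Fm" using le by simp
  then show ?thesis using s0 unfolding s_def by (simp add: field_simps)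
qed


lemma max_positive:
  assumes U: "uniform_hypergraph m n E" and C: "hg_connected n E" and m: "m \<ge> 2"
    and x: "x \<in> Ksph m n" and xmax: "\<forall>z\<in>Ksph m n. Fh E z \<le> Fh E x"
  shows "\<forall>i<n. 0 < x i"
proof (rule ccontr)
  assume "\<not> (\<forall>i<n. 0 < x i)"
  then obtain i1 where i1a: "i1 < n" "\<not> 0 < x i1" by blast
  have "0 \<le> x i1" using x unfolding Ksph_def by blast
  then have i1: "i1 < n" "x i1 = 0" using i1a by linarith+
  have x0: "\<forall>i. 0 \<le> x i" and xn: "\<forall>i\<ge>n. x i = 0" and xs: "(\<Sum>i<n. x i ^ m) = 1"
    using x unfolding Ksph_def by auto
  obtain k where k: "k < n" "x k \<noteq> 0"
  proof (rule ccontr)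
    assume "\<not> thesis"
    then have "\<forall>k<n. x k = 0" using that by blast
    then have "(\<Sum>i<n. x i ^ m) = 0" using m by simp
    with xs show False by simp
  qed
  have "\<exists>e\<in>E. \<exists>i\<in>e. \<exists>j\<in>e. x i = 0 \<and> x j \<noteq> 0"
  proof (rule ccontr)
    assume N: "\<not> ?thesis"
    have "\<forall>j<n. x j \<noteq> 0"
    proof (rule conn_closure[OF C k(1), of "\<lambda>j. x j \<noteq> 0", OF k(2)])
      fix e i j assume "e \<in> E" "i \<in> e" "j \<in> e" "x i \<noteq> 0"
      then show "x j \<noteq> 0" using N by blast
    qed
    with i1 show False by simp
  qed
  then obtain e i0 j0 where e: "e \<in> E" "i0 \<in> e" "j0 \<in> e" "x i0 = 0" "x j0 \<noteq> 0" by blast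
  have fe: "finite e" and ce: "card e = m" and en: "e \<subseteq> {..<n}" using unif_edge[OF U e(1)] by auto
  define W where "W = {l\<in>e. x l = 0}"
  define k where "k = card W"
  have WE: "W \<subseteq> e" unfolding W_def by auto
  have fW: "finite W" using fe WE finite_subset by blast
  have "i0 \<in> W" unfolding W_def using e by blast
  then have k1: "k \<ge> 1" unfolding k_def using fW
    by (metis One_nat_def Suc_leI card_gt_0_iff empty_iff)
  have "W \<subset> e" using e(3,5) WE unfolding W_def by auto
  then have km: "k < m" unfolding k_def using ce fe by (metis psubset_card_mono)
  define P where "P = prod x (e - W)"
  have P0: "P > 0" unfolding P_def
  proof (rule prod_pos)
    fix l assume "l \<in> e - W"
    then show "0 < x l" using x0 unfolding W_def by (simp add: order_less_le)
  qed
  define Fm where "Fm = Fh E x"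
  have Fm0: "Fm \<ge> 0" unfolding Fm_def using Fh_nonneg x0 by blast
  define a where "a = Fm * k + 1"
  have a1: "a \<ge> 1" unfolding a_def using Fm0 by simp
  define t where "t = min 1 (P / (2 * a))"
  have t0: "t > 0" unfolding t_def using P0 a1 by simp
  have t1: "t \<le> 1" unfolding t_def by simp
  have tP: "Fm * k * t < P"
  proof -
    have "Fm * k * t \<le> a * t" unfolding a_def using t0 by (simp add: field_simps)
    also have "\<dots> \<le> a * (P / (2 * a))" unfolding t_def using a1 by (intro mult_left_mono) auto
    also have "\<dots> = P / 2" using a1 by simp
    finally show ?thesis using P0 by simp
  qed
  define y where "y = (\<lambda>l. if l \<in> W then t else x l)"
  have y0: "\<forall>l. 0 \<le> y l" unfolding y_def using x0 t0 by simp
  have Wn: "W \<subseteq> {..<n}" using WE en by blast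
  have yn: "\<forall>l\<ge>n. y l = 0" unfolding y_def using xn Wn by auto
  have xy: "\<forall>l. x l \<le> y l" unfolding y_def W_def using x0 t0 by auto
  have ys: "(\<Sum>l<n. y l ^ m) = 1 + k * t ^ m"
  proof -
    have "(\<Sum>l<n. y l ^ m) = (\<Sum>l<n. x l ^ m + (if l \<in> W then t ^ m else 0))"
      by (rule sum.cong[OF refl]) (use m in \<open>auto simp: y_def W_def\<close>)
    also have "\<dots> = 1 + (\<Sum>l<n. (if l \<in> W then t ^ m else 0))" by (simp add: sum.distrib xs)
    also have "(\<Sum>l<n. (if l \<in> W then t ^ m else 0)) = (\<Sum>l\<in>{..<n} \<inter> W. t ^ m)"
      by (rule sum.inter_restrict[symmetric]) simp
    also have "{..<n} \<inter> W = W" using Wn by blast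
    finally show ?thesis unfolding k_def by simp
  qed
  have Fy: "Fh E y \<ge> Fm + t ^ k * P"
  proof -
    have fE: "finite E" using unif_finite[OF U] .
    have pxe: "prod x e = 0" using e fe by (metis prod_zero_iff)
    have pye: "prod y e = t ^ k * P"
    proof -
      have "prod y e = prod y W * prod y (e - W)" using prod.subset_diff[OF WE fe] by (simp add: mult.commute)
      also have "prod y W = t ^ k" unfolding k_def y_def by simp
      also have "prod y (e - W) = P" unfolding P_def y_def by (rule prod.cong) auto
      finally show ?thesis .
    qed
    have "Fh E y = prod y e + (\<Sum>e'\<in>E - {e}. prod y e')" unfolding Fh_def using fE e(1) by (simp add: sum.remove)
    moreover have "(\<Sum>e'\<in>E - {e}. prod y e') \<ge> (\<Sum>e'\<in>E - {e}. prod x e')"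
      by (intro sum_mono prod_mono) (use x0 xy in auto)
    moreover have "Fm = prod x e + (\<Sum>e'\<in>E - {e}. prod x e')" unfolding Fm_def Fh_def using fE e(1) by (simp add: sum.remove)
    ultimately show ?thesis using pxe pye by simp
  qed
  have "real k * t ^ m \<ge> 0" using t0 by simp
  then have "(\<Sum>l<n. y l ^ m) > 0" using ys by linarith
  then have "Fh E y \<le> Fm * (1 + k * t ^ m)"
    using Fh_homog[OF U m _ y0 yn] xmax ys unfolding Fm_def by simp
  with Fy have "t ^ k * P \<le> Fm * k * t ^ m" by (simp add: algebra_simps)
  also have "t ^ m = t ^ k * t ^ (m - k)" using km by (metis le_add_diff_inverse less_imp_le power_add)
  finally have "t ^ k * P \<le> t ^ k * (Fm * k * t ^ (m - k))" by (simp add: algebra_simps)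
  then have "P \<le> Fm * k * t ^ (m - k)" using t0 by (simp add: mult_le_cancel_left_pos)
  also have "t ^ (m - k) \<le> t ^ 1" using km t0 t1 by (intro power_decreasing) auto
  then have "Fm * k * t ^ (m - k) \<le> Fm * k * t" using Fm0 by (simp add: mult_left_mono)
  finally show False using tP by simp
qed


lemma Fh_update:
  assumes fE: "finite E" and fin: "\<forall>e\<in>E. finite e"
  shows "Fh E (x(i := x i + t)) = Fh E x + t * nbr E x i"
proof -
  have "Fh E (x(i := x i + t)) = (\<Sum>e\<in>E. prod x e + (if i \<in> e then t * prod x (e - {i}) else 0))"
    unfolding Fh_def
  proof (rule sum.cong[OF refl])
    fix e assume e: "e \<in> E"
    show "prod (x(i := x i + t)) e = prod x e + (if i \<in> e then t * prod x (e - {i}) else 0)"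
    proof (cases "i \<in> e")
      case True
      have "prod (x(i := x i + t)) e = (x i + t) * prod (x(i := x i + t)) (e - {i})"
        using fin e True by (simp add: prod.remove)
      also have "prod (x(i := x i + t)) (e - {i}) = prod x (e - {i})" by (rule prod.cong) auto
      also have "prod x e = x i * prod x (e - {i})" using fin e True by (simp add: prod.remove)
      ultimately show ?thesis using True by (simp add: algebra_simps)
    next
      case False
      then have "prod (x(i := x i + t)) e = prod x e" by (intro prod.cong) auto
      then show ?thesis using False by simp
    qed
  qed
  also have "\<dots> = Fh E x + (\<Sum>e\<in>E. if i \<in> e then t * prod x (e - {i}) else 0)"
    unfolding Fh_def by (simp add: sum.distrib)
  also have "(\<Sum>e\<in>E. if i \<in> e then t * prod x (e - {i}) else 0) = t * nbr E x i"
    unfolding nbr_def using fE by (simp add: sum.inter_filter sum_distrib_left) (rule sum.cong; simp)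
  finally show ?thesis .
qed

lemma max_eigen:
  assumes U: "uniform_hypergraph m n E" and m: "m \<ge> 2"
    and x: "x \<in> Ksph m n" and xmax: "\<forall>z\<in>Ksph m n. Fh E z \<le> Fh E x"
    and pos: "\<forall>i<n. 0 < x i" and i: "i < n"
  shows "nbr E x i = (Fh E x * m) * x i ^ (m - 1)"
proof -
  define Fm where "Fm = Fh E x"
  define N where "N = nbr E x i"
  have x0: "\<forall>i. 0 \<le> x i" and xn: "\<forall>i\<ge>n. x i = 0" and xs: "(\<Sum>i<n. x i ^ m) = 1"
    using x unfolding Ksph_def by auto
  have fE: "finite E" using unif_finite[OF U] .
  have fin: "\<forall>e\<in>E. finite e" using unif_edge(3)[OF U] by blast
  define g where "g = (\<lambda>t. Fm * ((x i + t) ^ m - x i ^ m) - t * N)"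
  have ge: "g 0 \<le> g t" if t: "\<bar>0 - t\<bar> < x i" for t
  proof -
    define y where "y = x(i := x i + t)"
    have pos_it: "x i + t > 0" using t by linarith
    have y0: "\<forall>l. 0 \<le> y l" unfolding y_def using x0 pos_it by simp
    have yn: "\<forall>l\<ge>n. y l = 0" unfolding y_def using xn i by simp
    have ys: "(\<Sum>l<n. y l ^ m) = 1 - x i ^ m + (x i + t) ^ m"
    proof -
      have "(\<Sum>l<n. y l ^ m) = y i ^ m + (\<Sum>l\<in>{..<n} - {i}. y l ^ m)"
        using i by (simp add: sum.remove)
      also have "(\<Sum>l\<in>{..<n} - {i}. y l ^ m) = (\<Sum>l\<in>{..<n} - {i}. x l ^ m)"
        unfolding y_def by (rule sum.cong) auto
      also have "\<dots> = 1 - x i ^ m" using xs i by (simp add: sum.remove)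
      finally show ?thesis unfolding y_def by simp
    qed
    have "(\<Sum>l<n. y l ^ m) \<ge> y i ^ m"
      by (rule member_le_sum) (use i y0 in auto)
    moreover have "y i ^ m > 0" unfolding y_def using pos_it by simp
    ultimately have "(\<Sum>l<n. y l ^ m) > 0" by linarith
    then have "Fh E y \<le> Fm * (\<Sum>l<n. y l ^ m)"
      using Fh_homog[OF U m _ y0 yn] xmax unfolding Fm_def by simp
    moreover have "Fh E y = Fm + t * N" unfolding y_def Fm_def N_def by (rule Fh_update[OF fE fin])
    ultimately have "Fm + t * N \<le> Fm * (1 - x i ^ m + (x i + t) ^ m)" using ys by simp
    then show ?thesis unfolding g_def by (simp add: algebra_simps)
  qed
  have D: "(g has_real_derivative (Fm * (m * x i ^ (m - 1)) - N)) (at 0)"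
    unfolding g_def by (auto intro!: derivative_eq_intros)
  have "Fm * (m * x i ^ (m - 1)) - N = 0"
    by (rule DERIV_local_min[OF D, of "x i"]) (use pos i ge in auto)
  then show ?thesis unfolding N_def Fm_def by (simp add: algebra_simps)
qed

lemma perron_real:
  assumes U: "uniform_hypergraph m n E" and C: "hg_connected n E" and m: "m \<ge> 2" and n: "n \<ge> 1"
  shows "\<exists>(v::nat\<Rightarrow>real) r. (\<forall>i<n. 0 < v i) \<and> (\<forall>i\<ge>n. v i = 0) \<and> v 0 = 1 \<and> r \<ge> 0 \<and>
     (\<forall>i<n. nbr E v i = r * v i ^ (m - 1))"
proof -
  have fE: "finite E" using unif_finite[OF U] .
  have "(\<lambda>i. if i = 0 then 1 else 0::real) \<in> Ksph m n"
  proof -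
    have "(\<Sum>i<n. (if i = 0 then 1 else 0::real) ^ m) = (\<Sum>i<n. (if i = 0 then 1 else 0::real))"
      by (rule sum.cong) (use m in auto)
    also have "\<dots> = 1" using n by (simp add: sum.delta)
    finally show ?thesis unfolding Ksph_def using n by auto
  qed
  then have ne: "Ksph m n \<noteq> {}" by blast
  have cK: "compact (Ksph m n)" using Ksph_compact m by simp
  obtain x where x: "x \<in> Ksph m n" and xmax: "\<forall>z\<in>Ksph m n. Fh E z \<le> Fh E x"
    using continuous_attains_sup[OF cK ne Fh_cont[OF fE]] by blast
  have pos: "\<forall>i<n. 0 < x i" by (rule max_positive[OF U C m x xmax])
  have x0: "\<forall>i. 0 \<le> x i" and xn: "\<forall>i\<ge>n. x i = 0"
    using x unfolding Ksph_def by auto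
  define r where "r = Fh E x * m"
  have r0: "r \<ge> 0" unfolding r_def using Fh_nonneg[OF x0] by simp
  have eig: "\<forall>i<n. nbr E x i = r * x i ^ (m - 1)"
  proof (intro allI impI)
    fix i assume "i < n"
    then show "nbr E x i = r * x i ^ (m - 1)" using max_eigen[OF U m x xmax pos, of i] unfolding r_def by simp
  qed
  define v where "v = (\<lambda>i. x i / x 0)"
  have x00: "x 0 > 0" using pos n by simp
  have ev: "nbr E v i = r * v i ^ (m - 1)" if i: "i < n" for i
  proof -
    have "nbr E v i = (\<Sum>e\<in>{e \<in> E. i \<in> e}. prod x (e - {i}) / x 0 ^ (m - 1))"
      unfolding nbr_def
    proof (rule sum.cong[OF refl])
      fix e assume e: "e \<in> {e \<in> E. i \<in> e}"
      have "prod v (e - {i}) = prod x (e - {i}) / prod (\<lambda>_. x 0) (e - {i})"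
        unfolding v_def by (rule prod_dividef)
      also have "prod (\<lambda>_. x 0) (e - {i}) = x 0 ^ (m - 1)"
        using unif_edge[OF U] e by simp
      finally show "prod v (e - {i}) = prod x (e - {i}) / x 0 ^ (m - 1)" .
    qed
    also have "\<dots> = nbr E x i / x 0 ^ (m - 1)" unfolding nbr_def by (simp add: sum_divide_distrib)
    also have "\<dots> = r * v i ^ (m - 1)" using eig i unfolding v_def by (simp add: power_divide)
    finally show ?thesis .
  qed
  have v1: "\<forall>i<n. 0 < v i" unfolding v_def using pos x00 by simp
  have v2: "\<forall>i\<ge>n. v i = 0" unfolding v_def using xn by simp
  have v3: "v 0 = 1" unfolding v_def using x00 by simp
  show ?thesis
    apply (rule exI[of _ v], rule exI[of _ r])
    using v1 v2 v3 r0 ev by simp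
qed


lemma tri_eq:
  fixes f :: "'a \<Rightarrow> complex"
  assumes fA: "finite A" and eq: "cmod (sum f A) = (\<Sum>a\<in>A. cmod (f a))" and a: "a \<in> A"
  shows "f a * cmod (sum f A) = cmod (f a) * sum f A"
proof (cases "sum f A = 0")
  case True
  then have "(\<Sum>a\<in>A. cmod (f a)) = 0" using eq by simp
  then have "\<forall>a\<in>A. cmod (f a) = 0" using fA by (subst (asm) sum_nonneg_eq_0_iff) auto
  then show ?thesis using a True by simp
next
  case False
  define s where "s = sum f A"
  have s0: "s \<noteq> 0" using False unfolding s_def .
  have le: "Re (cnj s * f b) \<le> cmod s * cmod (f b)" for b
    using complex_Re_le_cmod[of "cnj s * f b"] by (simp add: norm_mult)
  have "(\<Sum>b\<in>A. Re (cnj s * f b)) = Re (cnj s * s)" unfolding s_def by (simp add: sum_distrib_left)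
  also have "cnj s * s = of_real ((cmod s)^2)" by (metis complex_norm_square mult.commute)
  also have "Re \<dots> = cmod s * (\<Sum>b\<in>A. cmod (f b))" using eq unfolding s_def by (simp add: power2_eq_square)
  finally have "(\<Sum>b\<in>A. cmod s * cmod (f b) - Re (cnj s * f b)) = 0"
    by (simp add: sum_subtractf sum_distrib_left)
  then have "\<forall>b\<in>A. cmod s * cmod (f b) - Re (cnj s * f b) = 0"
    using fA le by (subst (asm) sum_nonneg_eq_0_iff) auto
  then have Re_eq: "Re (cnj s * f a) = cmod s * cmod (f a)" using a by simp
  define z where "z = cnj s * f a"
  have "cmod z = cmod s * cmod (f a)" unfolding z_def by (simp add: norm_mult)
  then have "(Re z)^2 + (Im z)^2 = (Re z)^2" using Re_eq cmod_power2[of z] unfolding z_def by simp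
  then have "Im z = 0" by simp
  then have "z = of_real (cmod s * cmod (f a))" using Re_eq unfolding z_def by (simp add: complex_eq_iff)
  then have zq: "cnj s * f a = of_real (cmod s * cmod (f a))" unfolding z_def by simp
  have "of_real (cmod s) * (of_real (cmod s) * f a) = of_real ((cmod s)^2) * f a"
    by (simp add: power2_eq_square)
  also have "\<dots> = s * (cnj s * f a)" by (metis complex_norm_square mult.assoc)
  also have "\<dots> = s * of_real (cmod s * cmod (f a))" using zq by simp
  also have "\<dots> = of_real (cmod s) * (s * of_real (cmod (f a)))" by (simp add: algebra_simps)
  finally have "of_real (cmod s) * (of_real (cmod s) * f a) = of_real (cmod s) * (s * of_real (cmod (f a)))" .
  then have "of_real (cmod s) * f a = s * of_real (cmod (f a))" using s0 by simp
  then show ?thesis unfolding s_def by (simp add: mult.commute)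
qed

locale pf =
  fixes m n :: nat and E :: "nat set set" and v :: "nat \<Rightarrow> real" and r :: real
  assumes U: "uniform_hypergraph m n E" and C: "hg_connected n E"
    and m2: "m \<ge> 2" and n1: "n \<ge> 1"
    and vpos: "\<forall>i<n. 0 < v i" and vn: "\<forall>i\<ge>n. v i = 0" and v0: "v 0 = 1" and r0: "r \<ge> 0"
    and veig: "\<forall>i<n. nbr E v i = r * v i ^ (m - 1)"
begin

definition vc :: "nat \<Rightarrow> complex" where "vc i = complex_of_real (v i)"

definition phi :: "(nat \<Rightarrow> complex) \<Rightarrow> nat \<Rightarrow> complex" where
  "phi d = (\<lambda>i. if i < n then d i * vc i else 0)"

abbreviation "A \<equiv> adj_tensor m E"

lemma fE: "finite E" using unif_finite[OF U] .
lemma edge_sub: "e \<in> E \<Longrightarrow> e \<subseteq> {..<n}" using unif_edge(1)[OF U] .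
lemma edge_fin: "e \<in> E \<Longrightarrow> finite e" using unif_edge(3)[OF U] .
lemma edge_card: "e \<in> E \<Longrightarrow> i \<in> e \<Longrightarrow> card (e - {i}) = m - 1" using unif_edge[OF U] by simp

lemma eig_iff:
  "tensor_eigenpair m n A lam y \<longleftrightarrow> is_vec n y \<and> (\<exists>i<n. y i \<noteq> 0) \<and> (\<forall>i<n. nbr E y i = lam * y i ^ (m - 1))"
  unfolding tensor_eigenpair_def using tensor_apply_adj[OF U m2] by simp

lemma nbr_abs: "cmod (nbr E y i) \<le> nbr E (\<lambda>j. cmod (y j)) i"
  unfolding nbr_def
  by (rule order.trans[OF norm_sum]) (simp add: prod_norm)

lemma nbr_mono:
  assumes "\<forall>j<n. 0 \<le> a j \<and> a j \<le> b j"
  shows "nbr E a i \<le> (nbr E b i :: real)"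
  unfolding nbr_def
proof (rule sum_mono, rule prod_mono)
  fix e j assume "e \<in> {e \<in> E. i \<in> e}" "j \<in> e - {i}"
  then have "j < n" using edge_sub by auto
  then show "0 \<le> a j \<and> a j \<le> b j" using assms by simp
qed

lemma nbr_scale: "nbr E (\<lambda>j. t * a j) i = t ^ (m - 1) * (nbr E a i :: 'a::comm_ring_1)"
  unfolding nbr_def sum_distrib_left
proof (rule sum.cong[OF refl])
  fix e assume e: "e \<in> {e \<in> E. i \<in> e}"
  show "prod (\<lambda>j. t * a j) (e - {i}) = t ^ (m - 1) * prod a (e - {i})"
    using edge_card[of e i] e by (simp add: prod.distrib)
qed

lemma nbr_of_real: "nbr E (\<lambda>j. complex_of_real (a j)) i = complex_of_real (nbr E a i)"
  unfolding nbr_def by simp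

lemma max_ratio:
  assumes "\<exists>k<n. y k \<noteq> 0"
  obtains t i where "t > 0" "i < n" "cmod (y i) = t * v i" "\<forall>j<n. cmod (y j) \<le> t * v j"
proof -
  define q where "q j = cmod (y j) / v j" for j
  define t where "t = Max (q ` {..<n})"
  have "q 0 \<in> q ` {..<n}" using n1 by simp
  then have ne: "q ` {..<n} \<noteq> {}" by blast
  obtain i where i: "i < n" "q i = t" using Max_in[OF _ ne] unfolding t_def by auto
  have le: "q j \<le> t" if "j < n" for j unfolding t_def using that by (intro Max_ge) auto
  obtain k where k: "k < n" "y k \<noteq> 0" using assms by blast
  have "q k > 0" unfolding q_def using k vpos by simp
  then have t0: "t > 0" using le[OF k(1)] by simp
  have "v i > 0" using vpos i by simp
  then have "cmod (y i) = t * v i" using i(2) unfolding q_def by (simp add: field_simps)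
  moreover have "\<forall>j<n. cmod (y j) \<le> t * v j"
  proof (intro allI impI)
    fix j assume j: "j < n"
    then show "cmod (y j) \<le> t * v j" using le[OF j] vpos unfolding q_def by (simp add: field_simps)
  qed
  ultimately show ?thesis using that t0 i by blast
qed

lemma bound_chain:
  assumes bd: "\<forall>j<n. cmod (y j) \<le> t * v j" and t0: "t > 0" and i: "i < n"
  shows "cmod (nbr E y i) \<le> nbr E (\<lambda>j. cmod (y j)) i"
    and "nbr E (\<lambda>j. cmod (y j)) i \<le> t ^ (m - 1) * r * v i ^ (m - 1)"
proof -
  show "cmod (nbr E y i) \<le> nbr E (\<lambda>j. cmod (y j)) i" by (rule nbr_abs)
  have "nbr E (\<lambda>j. cmod (y j)) i \<le> nbr E (\<lambda>j. t * v j) i"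
    by (rule nbr_mono) (use bd in auto)
  also have "\<dots> = t ^ (m - 1) * nbr E v i" by (rule nbr_scale)
  also have "\<dots> = t ^ (m - 1) * r * v i ^ (m - 1)" using veig i by simp
  finally show "nbr E (\<lambda>j. cmod (y j)) i \<le> t ^ (m - 1) * r * v i ^ (m - 1)" .
qed

lemma ev_bound:
  assumes "tensor_eigenpair m n A lam y"
  shows "cmod lam \<le> r"
proof -
  have y: "\<exists>k<n. y k \<noteq> 0" "\<forall>i<n. nbr E y i = lam * y i ^ (m - 1)"
    using assms unfolding eig_iff by auto
  obtain t i where t: "t > 0" "i < n" "cmod (y i) = t * v i" "\<forall>j<n. cmod (y j) \<le> t * v j"
    using max_ratio[OF y(1)] by blast
  have "cmod lam * cmod (y i) ^ (m - 1) = cmod (nbr E y i)"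
    using y(2) t(2) by (simp add: norm_mult norm_power)
  also have "\<dots> \<le> t ^ (m - 1) * r * v i ^ (m - 1)"
    using bound_chain[OF t(4) t(1) t(2)] by linarith
  also have "\<dots> = r * cmod (y i) ^ (m - 1)" using t(3) by (simp add: power_mult_distrib)
  finally have "cmod lam * cmod (y i) ^ (m - 1) \<le> r * cmod (y i) ^ (m - 1)" .
  moreover have "cmod (y i) > 0" using t vpos by simp
  ultimately show ?thesis by (simp add: mult_le_cancel_right)
qed


lemma vc_fun: "vc = (\<lambda>j. complex_of_real (v j))" by (rule ext) (simp add: vc_def)

lemma vc_nz: assumes "i < n" shows "vc i \<noteq> 0"
proof -
  have "0 < v i" using vpos assms by blast
  then show ?thesis by (simp add: vc_def)
qed

lemma ev_rho:
  assumes eg: "tensor_eigenpair m n A (of_real r) y" and y0: "y 0 = 1"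
  shows "(\<lambda>k. if k < n then sgn (y k) else 1) \<in> stabset m n E"
    and "y = phi (\<lambda>k. if k < n then sgn (y k) else 1)"
proof -
  define d where "d = (\<lambda>k. if k < n then sgn (y k) else (1::complex))"
  have y: "is_vec n y" "\<exists>k<n. y k \<noteq> 0" "\<forall>i<n. nbr E y i = of_real r * y i ^ (m - 1)"
    using eg unfolding eig_iff by auto
  obtain t i where t: "t > 0" "i < n" "cmod (y i) = t * v i" "\<forall>j<n. cmod (y j) \<le> t * v j"
    using max_ratio[OF y(2)] by blast
  have step: "cmod (y l) = t * v l"
    if e: "e \<in> E" "j \<in> e" "l \<in> e" and P: "cmod (y j) = t * v j" for e j l
  proof -
    have j: "j < n" and l: "l < n" using edge_sub e by auto
    define a where "a = (\<lambda>k. cmod (y k))"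
    define b where "b = (\<lambda>k. t * v k)"
    have "r * cmod (y j) ^ (m - 1) = cmod (nbr E y j)" using y(3) j r0 by (simp add: norm_mult norm_power)
    also have "\<dots> \<le> nbr E a j" unfolding a_def by (rule nbr_abs)
    finally have h1: "r * cmod (y j) ^ (m - 1) \<le> nbr E a j" .
    have h2: "nbr E a j \<le> nbr E b j" unfolding a_def b_def by (rule nbr_mono) (use t(4) in auto)
    have "nbr E b j = t ^ (m - 1) * nbr E v j" unfolding b_def by (rule nbr_scale)
    also have "\<dots> = r * cmod (y j) ^ (m - 1)" using veig j P by (simp add: power_mult_distrib)
    finally have h3: "nbr E b j = r * cmod (y j) ^ (m - 1)" .
    have "(\<Sum>e'\<in>{e \<in> E. j \<in> e}. prod b (e' - {j}) - prod a (e' - {j})) = 0"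
      using h1 h2 h3 unfolding nbr_def by (simp add: sum_subtractf)
    moreover have "\<forall>e'\<in>{e \<in> E. j \<in> e}. prod a (e' - {j}) \<le> prod b (e' - {j})"
    proof
      fix e' assume e': "e' \<in> {e \<in> E. j \<in> e}"
      show "prod a (e' - {j}) \<le> prod b (e' - {j})"
      proof (rule prod_mono)
        fix k assume "k \<in> e' - {j}"
        then have "k < n" using edge_sub e' by auto
        then show "0 \<le> a k \<and> a k \<le> b k" unfolding a_def b_def using t(4) by simp
      qed
    qed
    ultimately have pab: "prod a (e - {j}) = prod b (e - {j})"
      using e fE by (subst (asm) sum_nonneg_eq_0_iff) auto
    show ?thesis
    proof (cases "l = j")
      case True then show ?thesis using P by simp
    next
      case False
      define R where "R = e - {j} - {l}"
      have lR: "l \<in> e - {j}" using False e by simp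
      have fin: "finite (e - {j})" using edge_fin e by simp
      have pa: "prod a (e - {j}) = a l * prod a R" unfolding R_def using prod.remove[OF fin lR] by simp
      have pb: "prod b (e - {j}) = b l * prod b R" unfolding R_def using prod.remove[OF fin lR] by simp
      have Rn: "R \<subseteq> {..<n}" unfolding R_def using edge_sub e by auto
      have aR: "prod a R \<le> prod b R"
      proof (rule prod_mono)
        fix k assume "k \<in> R"
        then have "k < n" using Rn by auto
        then show "0 \<le> a k \<and> a k \<le> b k" unfolding a_def b_def using t(4) by simp
      qed
      have bR: "prod b R > 0"
      proof (rule prod_pos)
        fix k assume "k \<in> R"
        then have "k < n" using Rn by auto
        then show "0 < b k" unfolding b_def using t(1) vpos by simp
      qed
      have al: "a l \<le> b l" unfolding a_def b_def using t(4) l by simp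
      have a0: "a l \<ge> 0" unfolding a_def by simp
      show ?thesis
      proof (rule ccontr)
        assume "cmod (y l) \<noteq> t * v l"
        then have lt: "a l < b l" using al unfolding a_def b_def by simp
        have "a l * prod a R \<le> a l * prod b R" using aR a0 by (simp add: mult_left_mono)
        also have "\<dots> < b l * prod b R" using lt bR by (simp add: mult_strict_right_mono)
        finally show False using pa pb pab by simp
      qed
    qed
  qed
  have all: "\<forall>j<n. cmod (y j) = t * v j"
    by (rule conn_closure[OF C t(2), of "\<lambda>j. cmod (y j) = t * v j", OF t(3)]) (use step in blast)
  have "t = 1" using all[rule_format, of 0] n1 y0 v0 by simp
  then have ab: "\<forall>j<n. cmod (y j) = v j" using all by simp
  have ynz: "y j \<noteq> 0" if "j < n" for j
  proof
    assume "y j = 0"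
    then have "v j = 0" using ab that by (metis norm_zero)
    then show False using vpos[rule_format, OF that] by simp
  qed
  have yd: "y k = d k * vc k" if k: "k < n" for k
  proof -
    have "d k = y k / vc k" unfolding d_def vc_def using k ab by (simp add: sgn_eq)
    then show ?thesis using vc_nz[OF k] by simp
  qed
  show "y = phi (\<lambda>k. if k < n then sgn (y k) else 1)"
  proof (rule ext)
    fix k show "y k = phi (\<lambda>k. if k < n then sgn (y k) else 1) k"
      using yd[of k] y(1) unfolding phi_def d_def is_vec_def by auto
  qed
  have edge: "prod d (e - {j}) = d j ^ (m - 1)" if e: "e \<in> E" "j \<in> e" for e j
  proof -
    have j: "j < n" using edge_sub e by auto
    define Ej where "Ej = {e \<in> E. j \<in> e}"
    define f where "f = (\<lambda>e'. prod y (e' - {j}))"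
    have fEj: "finite Ej" unfolding Ej_def using fE by simp
    have eEj: "e \<in> Ej" unfolding Ej_def using e by simp
    have sf: "sum f Ej = of_real r * y j ^ (m - 1)" using y(3) j unfolding f_def Ej_def nbr_def by simp
    have cf: "cmod (f e') = prod v (e' - {j})" if "e' \<in> Ej" for e'
    proof -
      have "cmod (f e') = prod (\<lambda>k. cmod (y k)) (e' - {j})" unfolding f_def by (simp add: prod_norm)
      also have "\<dots> = prod v (e' - {j})"
      proof (rule prod.cong[OF refl])
        fix k assume "k \<in> e' - {j}"
        then have "k < n" using edge_sub that unfolding Ej_def by auto
        then show "cmod (y k) = v k" using ab by simp
      qed
      finally show ?thesis .
    qed
    have "cmod (sum f Ej) = r * v j ^ (m - 1)" using sf ab j r0 by (simp add: norm_mult norm_power)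
    also have "\<dots> = nbr E v j" using veig j by simp
    also have "\<dots> = (\<Sum>e'\<in>Ej. cmod (f e'))" unfolding nbr_def Ej_def using cf unfolding Ej_def by simp
    finally have tri: "cmod (sum f Ej) = (\<Sum>e'\<in>Ej. cmod (f e'))" .
    have key: "f e * cmod (sum f Ej) = cmod (f e) * sum f Ej" by (rule tri_eq[OF fEj tri eEj])
    define pv where "pv = prod v (e - {j})"
    have pv0: "pv > 0" unfolding pv_def
    proof (rule prod_pos)
      fix k assume "k \<in> e - {j}"
      then have "k < n" using edge_sub e by auto
      then show "0 < v k" using vpos by simp
    qed
    have "pv \<le> nbr E v j" unfolding pv_def nbr_def
      by (rule member_le_sum) (use e fE in \<open>auto intro!: prod_nonneg simp: order_less_imp_le[OF vpos[rule_format]] dest: edge_sub[THEN subsetD]\<close>)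
    then have "r * v j ^ (m - 1) > 0" using pv0 veig j by simp
    then have rpos: "r > 0" using r0 vpos j by (metis mult_eq_0_iff order_le_less zero_less_power mult_pos_pos less_irrefl linorder_neqE_linordered_idom)
    have fe: "f e = prod d (e - {j}) * of_real pv"
    proof -
      have "f e = prod (\<lambda>k. d k * vc k) (e - {j})" unfolding f_def
      proof (rule prod.cong[OF refl])
        fix k assume "k \<in> e - {j}"
        then have "k < n" using edge_sub e by auto
        then show "y k = d k * vc k" by (rule yd)
      qed
      also have "\<dots> = prod d (e - {j}) * prod vc (e - {j})" by (simp add: prod.distrib)
      also have "prod vc (e - {j}) = of_real pv" unfolding pv_def vc_fun by simp
      finally show ?thesis .
    qed
    have "cmod (f e) = pv" unfolding pv_def using cf eEj by simp
    then have "prod d (e - {j}) * of_real pv * of_real (r * v j ^ (m - 1))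
        = of_real pv * (of_real r * (d j * vc j) ^ (m - 1))"
      using key fe sf \<open>cmod (sum f Ej) = r * v j ^ (m - 1)\<close> yd[OF j] by simp
    then have "prod d (e - {j}) * (of_real pv * of_real r * of_real (v j) ^ (m - 1))
        = d j ^ (m - 1) * (of_real pv * of_real r * of_real (v j) ^ (m - 1))"
      unfolding vc_def by (simp add: power_mult_distrib algebra_simps)
    moreover have "of_real pv * of_real r * (of_real (v j) :: complex) ^ (m - 1) \<noteq> 0"
      using pv0 rpos vpos[rule_format, OF j] by simp
    ultimately show ?thesis by (metis mult_right_cancel)
  qed
  show "(\<lambda>k. if k < n then sgn (y k) else 1) \<in> stabset m n E"
    unfolding stabset_def
  proof (intro CollectI conjI allI impI ballI)
    fix i assume "i < n" then show "(if i < n then sgn (y i) else 1) \<noteq> 0" using ynz by (simp add: sgn_eq_0_iff)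
  next
    fix i assume "n \<le> i" then show "(if i < n then sgn (y i) else 1) = 1" by simp
  next
    show "(if 0 < n then sgn (y 0) else 1) = 1" using y0 by simp
  next
    fix e i assume "e \<in> E" "i \<in> e"
    then show "prod (\<lambda>k. if k < n then sgn (y k) else 1) (e - {i}) = (if i < n then sgn (y i) else 1) ^ (m - 1)"
      using edge[of e i] unfolding d_def by simp
  qed
qed

lemma one_stab: "(\<lambda>_. 1) \<in> stabset m n E" unfolding stabset_def by simp

lemma stab_eig:
  assumes d: "d \<in> stabset m n E"
  shows "tensor_eigenpair m n A (of_real r) (phi d)" "phi d 0 = 1"
proof -
  have dp: "\<forall>i<n. d i \<noteq> 0" "d 0 = 1" "\<forall>e\<in>E. \<forall>i\<in>e. prod d (e - {i}) = d i ^ (m - 1)"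
    using d unfolding stabset_def by auto
  show p0: "phi d 0 = 1" unfolding phi_def using n1 dp(2) v0 by (simp add: vc_def)
  have "nbr E (phi d) i = of_real r * phi d i ^ (m - 1)" if i: "i < n" for i
  proof -
    have "nbr E (phi d) i = (\<Sum>e\<in>{e \<in> E. i \<in> e}. d i ^ (m - 1) * prod vc (e - {i}))"
      unfolding nbr_def
    proof (rule sum.cong[OF refl])
      fix e assume e: "e \<in> {e \<in> E. i \<in> e}"
      have "prod (phi d) (e - {i}) = prod (\<lambda>k. d k * vc k) (e - {i})"
      proof (rule prod.cong[OF refl])
        fix k assume "k \<in> e - {i}"
        then have "k < n" using edge_sub e by auto
        then show "phi d k = d k * vc k" unfolding phi_def by simp
      qed
      also have "\<dots> = prod d (e - {i}) * prod vc (e - {i})" by (simp add: prod.distrib)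
      also have "\<dots> = d i ^ (m - 1) * prod vc (e - {i})" using dp(3) e by simp
      finally show "prod (phi d) (e - {i}) = d i ^ (m - 1) * prod vc (e - {i})" .
    qed
    also have "\<dots> = d i ^ (m - 1) * nbr E vc i" unfolding nbr_def by (simp add: sum_distrib_left)
    also have "nbr E vc i = of_real (nbr E v i)" unfolding vc_fun by (rule nbr_of_real)
    also have "\<dots> = of_real r * vc i ^ (m - 1)" using veig i by (simp add: vc_def)
    finally show ?thesis unfolding phi_def using i by (simp add: power_mult_distrib algebra_simps)
  qed
  moreover have "is_vec n (phi d)" unfolding is_vec_def phi_def by simp
  moreover have "\<exists>i<n. phi d i \<noteq> 0" using p0 n1 by (intro exI[of _ 0]) simp
  ultimately show "tensor_eigenpair m n A (of_real r) (phi d)" unfolding eig_iff by blast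
qed

lemma spec_rad: "spectral_radius m n A = r"
  unfolding spectral_radius_def
proof (rule cSup_eq_maximum)
  have "tensor_eigenpair m n A (of_real r) (phi (\<lambda>_. 1))" by (rule stab_eig(1)[OF one_stab])
  then show "r \<in> {cmod lam |lam. \<exists>x. tensor_eigenpair m n A lam x}" using r0 by force
next
  fix x assume "x \<in> {cmod lam |lam. \<exists>x. tensor_eigenpair m n A lam x}"
  then show "x \<le> r" using ev_bound by auto
qed

lemma rho_eq: "rho_eigvecs m n A = phi ` stabset m n E"
proof (intro Set.set_eqI iffI)
  fix y assume "y \<in> rho_eigvecs m n A"
  then have "tensor_eigenpair m n A (of_real r) y" "y 0 = 1" unfolding rho_eigvecs_def spec_rad by auto
  then show "y \<in> phi ` stabset m n E" using ev_rho by blast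
next
  fix y assume "y \<in> phi ` stabset m n E"
  then obtain d where "d \<in> stabset m n E" "y = phi d" by blast
  then show "y \<in> rho_eigvecs m n A" unfolding rho_eigvecs_def spec_rad using stab_eig by blast
qed

lemma pos_eq: "positive_eigvec m n A = phi (\<lambda>_. 1)"
  unfolding positive_eigvec_def
proof (rule the_equality)
  show "phi (\<lambda>_. 1) \<in> rho_eigvecs m n A \<and> (\<forall>i<n. Im (phi (\<lambda>_. 1) i) = 0 \<and> 0 < Re (phi (\<lambda>_. 1) i))"
    using rho_eq one_stab vpos by (auto simp: phi_def vc_def)
next
  fix w assume w: "w \<in> rho_eigvecs m n A \<and> (\<forall>i<n. Im (w i) = 0 \<and> 0 < Re (w i))"
  then have "tensor_eigenpair m n A (of_real r) w" "w 0 = 1" unfolding rho_eigvecs_def spec_rad by auto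
  then have weq: "w = phi (\<lambda>k. if k < n then sgn (w k) else 1)" by (rule ev_rho(2))
  have sw: "sgn (w k) = 1" if k: "k < n" for k
  proof -
    have "w k = of_real (Re (w k))" using w k by (simp add: complex_eq_iff)
    then show ?thesis using w k by (metis sgn_of_real sgn_pos of_real_1)
  qed
  show "w = phi (\<lambda>_. 1)"
  proof (rule ext)
    fix k show "w k = phi (\<lambda>_. 1) k"
      using fun_cong[OF weq, of k] sw[of k] unfolding phi_def by (cases "k < n") auto
  qed
qed

lemma stab_norm: "d \<in> stabset m n E \<Longrightarrow> cmod (d i) = 1"
proof -
  assume d: "d \<in> stabset m n E"
  have "d i ^ m = 1" by (rule stabset_root[OF U C n1 d m2])
  then have "cmod (d i) ^ m = 1 ^ m" by (metis norm_one norm_power power_one)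
  then show "cmod (d i) = 1" using m2 by (subst (asm) power_eq_iff_eq_base) auto
qed

lemma module_mult:
  assumes d: "d \<in> stabset m n E" and d': "d' \<in> stabset m n E"
  shows "(\<lambda>i. sgn (phi d i) * sgn (phi d' i) * phi (\<lambda>_. 1) i) = phi (\<lambda>i. d i * d' i)"
proof (rule ext)
  fix i
  show "sgn (phi d i) * sgn (phi d' i) * phi (\<lambda>_. 1) i = phi (\<lambda>i. d i * d' i) i"
  proof (cases "i < n")
    case True
    have sv: "sgn (vc i) = 1" using vpos True unfolding vc_def by (simp add: sgn_of_real)
    have sd: "sgn (d i) = d i" "sgn (d' i) = d' i" using stab_norm[OF d] stab_norm[OF d'] by (simp_all add: sgn_eq)
    show ?thesis using True sv sd unfolding phi_def by (simp add: sgn_mult)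
  next
    case False then show ?thesis unfolding phi_def by simp
  qed
qed

lemma phi_inj: "inj_on phi (stabset m n E)"
proof (rule inj_onI)
  fix d d' assume d: "d \<in> stabset m n E" and d': "d' \<in> stabset m n E" and eq: "phi d = phi d'"
  show "d = d'"
  proof (rule ext)
    fix i show "d i = d' i"
    proof (cases "i < n")
      case True
      then have "d i * vc i = d' i * vc i" using fun_cong[OF eq, of i] unfolding phi_def by simp
      then show ?thesis using vc_nz[OF True] by simp
    next
      case False then show ?thesis using d d' unfolding stabset_def by simp
    qed
  qed
qed

end


definition Omega :: "nat \<Rightarrow> nat" where "Omega k = size (prime_factorization k)"

lemma simple_comm_prime:
  assumes S: "simple_group Q" and Cm: "comm_group Q" and F: "finite (carrier Q)"
  shows "Factorial_Ring.prime (card (carrier Q))"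
proof -
  interpret Q: comm_group Q by (rule Cm)
  interpret S: simple_group Q by (rule S)
  define N where "N = card (carrier Q)"
  have N1: "N > 1" unfolding N_def using S.order_gt_one by (simp add: Coset.order_def)
  have gen: "Q.ord g = N" if g: "g \<in> carrier Q" "g \<noteq> \<one>\<^bsub>Q\<^esub>" for g
  proof -
    have sg: "subgroup (generate Q {g}) Q" using g by (intro Q.generate_is_subgroup) auto
    then have "generate Q {g} \<lhd> Q" by (rule Q.subgroup_imp_normal)
    then have "generate Q {g} = carrier Q \<or> generate Q {g} = {\<one>\<^bsub>Q\<^esub>}" by (rule S.no_real_normal_subgroup)
    moreover have "g \<in> generate Q {g}" by (rule generate.incl) simp
    ultimately have "generate Q {g} = carrier Q" using g by auto
    then show ?thesis using Q.generate_pow_card[OF g(1)] unfolding N_def by simp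
  qed
  show ?thesis
  proof (rule ccontr)
    assume np: "\<not> Factorial_Ring.prime (card (carrier Q))"
    obtain p where p: "Factorial_Ring.prime p" "p dvd N" using prime_factor_nat[of N] N1 by auto
    then have pN: "p \<noteq> N" using np unfolding N_def by auto
    obtain k where k: "N = p * k" using p(2) by blast
    have k1: "k > 1"
    proof (rule ccontr)
      assume "\<not> k > 1"
      then have "k = 0 \<or> k = 1" by linarith
      then show False using k N1 pN by (metis mult_0_right mult_1_right less_irrefl not_one_less_zero)
    qed
    have "carrier Q \<noteq> {\<one>\<^bsub>Q\<^esub>}" by (rule S.simple_not_triv)
    then obtain g where g: "g \<in> carrier Q" "g \<noteq> \<one>\<^bsub>Q\<^esub>" using Q.one_closed by blast
    have og: "Q.ord g = N" by (rule gen[OF g])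
    have p0: "p \<noteq> 0" using p(1) by auto
    have oh: "Q.ord (g [^]\<^bsub>Q\<^esub> p) = k"
      using Q.ord_pow[OF g(1), of p] og p(2) p0 k by simp
    have hc: "g [^]\<^bsub>Q\<^esub> p \<in> carrier Q" using g by simp
    have "g [^]\<^bsub>Q\<^esub> p \<noteq> \<one>\<^bsub>Q\<^esub>" using oh k1 Q.ord_eq_1[OF hc] by auto
    then have "Q.ord (g [^]\<^bsub>Q\<^esub> p) = N" using gen[OF hc] by simp
    then have "k = p * k" using oh k by simp
    then have "p = 1" using k1 by simp
    then show False using p(1) by simp
  qed
qed


lemma sub_comm_group:
  assumes Cm: "comm_group G" and H: "subgroup H G"
  shows "comm_group (G\<lparr>carrier := H\<rparr>)"
proof -
  interpret G: comm_group G by (rule Cm)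
  have gr: "group (G\<lparr>carrier := H\<rparr>)" by (rule subgroup.subgroup_is_group[OF H G.is_group])
  show ?thesis
  proof (rule group.group_comm_groupI[OF gr])
    fix x y assume "x \<in> carrier (G\<lparr>carrier := H\<rparr>)" "y \<in> carrier (G\<lparr>carrier := H\<rparr>)"
    then have "x \<in> carrier G" "y \<in> carrier G" using subgroup.subset[OF H] by auto
    then show "x \<otimes>\<^bsub>G\<lparr>carrier := H\<rparr>\<^esub> y = y \<otimes>\<^bsub>G\<lparr>carrier := H\<rparr>\<^esub> x" using G.m_comm by simp
  qed
qed

lemma Omega_mult_prime:
  assumes p: "Factorial_Ring.prime p" and c: "c > 0"
  shows "Omega (p * c) = Suc (Omega c)"
proof -
  have "prime_factorization (p * c) = prime_factorization p + prime_factorization c"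
    using p c by (intro prime_factorization_mult) auto
  then show ?thesis unfolding Omega_def using p by (simp add: prime_factorization_prime)
qed

lemma factor_card:
  assumes Cm: "comm_group G" and F: "finite (carrier G)" and M: "subgroup M G"
    and N: "H \<lhd> G\<lparr>carrier := M\<rparr>" and S: "simple_group (G\<lparr>carrier := M\<rparr> Mod H)"
  shows "\<exists>p. Factorial_Ring.prime p \<and> card M = p * card H"
proof -
  define K where "K = G\<lparr>carrier := M\<rparr>"
  have CK: "comm_group K" unfolding K_def by (rule sub_comm_group[OF Cm M])
  interpret K: comm_group K by (rule CK)
  have HK: "subgroup H K" using N unfolding K_def by (rule normal_imp_subgroup)
  have fM: "finite M" using F subgroup.subset[OF M] finite_subset by blast
  have CQ: "comm_group (K Mod H)" by (rule K.abelian_FactGroup[OF HK])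
  have "carrier (K Mod H) \<subseteq> Pow (carrier K)"
    using K.rcosets_part_G[OF HK] unfolding FactGroup_def by auto
  moreover have "finite (Pow (carrier K))" using fM unfolding K_def by simp
  ultimately have FQ: "finite (carrier (K Mod H))" using finite_subset by blast
  have pr: "Factorial_Ring.prime (card (carrier (K Mod H)))"
    using simple_comm_prime[OF S[folded K_def] CQ FQ] .
  have "card (rcosets\<^bsub>K\<^esub> H) * card H = Coset.order K" by (rule K.lagrange[OF HK])
  then have "card M = card (carrier (K Mod H)) * card H"
    unfolding FactGroup_def Coset.order_def K_def by simp
  then show ?thesis using pr by blast
qed

lemma series_length:
  assumes Cm: "comm_group G" and F: "finite (carrier G)" and CS: "composition_series G Hs"
  shows "length Hs = Suc (Omega (card (carrier G)))"
proof -
  interpret G: comm_group G by (rule Cm)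
  have cs: "Hs \<noteq> []" "hd Hs = {\<one>\<^bsub>G\<^esub>}" "last Hs = carrier G" "\<forall>H\<in>set Hs. subgroup H G"
    "\<forall>i. Suc i < length Hs \<longrightarrow> normal (Hs ! i) (G\<lparr>carrier := Hs ! Suc i\<rparr>) \<and>
        simple_group ((G\<lparr>carrier := Hs ! Suc i\<rparr>) Mod (Hs ! i))"
    using CS unfolding composition_series_def by auto
  have claim: "i < length Hs \<longrightarrow> Omega (card (Hs ! i)) = i \<and> card (Hs ! i) > 0" for i
  proof (induction i)
    case 0
    show ?case
    proof
      assume "0 < length Hs"
      then have "Hs ! 0 = {\<one>\<^bsub>G\<^esub>}" using cs(2) by (simp add: hd_conv_nth[symmetric])
      then show "Omega (card (Hs ! 0)) = 0 \<and> card (Hs ! 0) > 0" unfolding Omega_def by simp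
    qed
  next
    case (Suc i)
    show ?case
    proof
      assume l: "Suc i < length Hs"
      then have IH: "Omega (card (Hs ! i)) = i" "card (Hs ! i) > 0" using Suc by auto
      have M: "subgroup (Hs ! Suc i) G" using cs(4) l by simp
      obtain p where p: "Factorial_Ring.prime p" "card (Hs ! Suc i) = p * card (Hs ! i)"
        using factor_card[OF Cm F M] cs(5) l by blast
      have "Omega (card (Hs ! Suc i)) = Suc i" using p IH Omega_mult_prime by simp
      moreover have "card (Hs ! Suc i) > 0" using p IH by (simp add: prime_gt_0_nat)
      ultimately show "Omega (card (Hs ! Suc i)) = Suc i \<and> card (Hs ! Suc i) > 0" by simp
    qed
  qed
  define l where "l = length Hs - 1"
  have l: "l < length Hs" "length Hs = Suc l" using cs(1) unfolding l_def by (cases Hs; simp)+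
  have "Hs ! l = carrier G" using cs(3) cs(1) unfolding l_def by (simp add: last_conv_nth)
  then have "Omega (card (carrier G)) = l" using claim[of l] l by simp
  then show ?thesis using l by simp
qed


lemma min_simple:
  assumes Cm: "comm_group G" and F: "finite (carrier G)" and H: "subgroup H G" and M: "subgroup M G"
    and HM: "H \<subset> M"
    and minimal: "\<And>U. subgroup U G \<Longrightarrow> H \<subset> U \<Longrightarrow> U \<subseteq> M \<Longrightarrow> U = M"
  shows "H \<lhd> G\<lparr>carrier := M\<rparr>" and "simple_group (G\<lparr>carrier := M\<rparr> Mod H)"
proof -
  interpret G: comm_group G by (rule Cm)
  define K where "K = G\<lparr>carrier := M\<rparr>"
  have CK: "comm_group K" unfolding K_def by (rule sub_comm_group[OF Cm M])
  interpret K: comm_group K by (rule CK)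
  have HK: "subgroup H K" unfolding K_def using G.subgroup_incl[OF H M] HM by auto
  show NK: "H \<lhd> G\<lparr>carrier := M\<rparr>" using K.subgroup_imp_normal[OF HK] unfolding K_def .
  then have NK': "H \<lhd> K" unfolding K_def .
  interpret N: normal H K by (rule NK')
  define Q where "Q = K Mod H"
  have grQ: "group Q" unfolding Q_def by (rule N.factorgroup_is_group)
  have cQ: "carrier Q = RCOSETS K H" unfolding Q_def FactGroup_def by simp
  have mQ: "A \<otimes>\<^bsub>Q\<^esub> B = set_mult K A B" for A B unfolding Q_def FactGroup_def by simp
  have oQ: "\<one>\<^bsub>Q\<^esub> = H" unfolding Q_def FactGroup_def by simp
  have cK: "carrier K = M" unfolding K_def by simp
  have fM: "finite M" using F subgroup.subset[OF M] finite_subset by blast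
  have fH: "finite H" using fM HM finite_subset by blast
  have "card (RCOSETS K H) * card H = Coset.order K" by (rule K.lagrange[OF HK])
  then have lag: "card (carrier Q) * card H = card M" unfolding cQ Coset.order_def cK .
  have "card H < card M" using HM fM by (rule psubset_card_mono[rotated])
  moreover have "card H > 0" using fH subgroup.one_closed[OF H] by (auto simp: card_gt_0_iff)
  have oQ1: "card (carrier Q) > 1"
  proof (rule ccontr)
    assume "\<not> 1 < card (carrier Q)"
    then have "card (carrier Q) \<le> 1" by simp
    then have "card (carrier Q) * card H \<le> 1 * card H" by (rule mult_le_mono1)
    then show False using lag \<open>card H < card M\<close> by simp
  qed
  have rc: "\<exists>a\<in>M. C = r_coset K H a" if "C \<in> carrier Q" for C
    using that unfolding cQ RCOSETS_def cK by auto
  have noreal: "NN = carrier Q \<or> NN = {\<one>\<^bsub>Q\<^esub>}" if NN: "NN \<lhd> Q" for NN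
  proof -
    have sN: "subgroup NN Q" using NN by (rule normal_imp_subgroup)
    define U where "U = \<Union>NN"
    have HN: "H \<in> NN" using subgroup.one_closed[OF sN] oQ by simp
    have NQ: "NN \<subseteq> carrier Q" using subgroup.subset[OF sN] .
    have UM: "U \<subseteq> M"
    proof
      fix x assume "x \<in> U"
      then obtain C where C: "C \<in> NN" "x \<in> C" unfolding U_def by blast
      then obtain a where a: "a \<in> M" "C = r_coset K H a" using rc NQ by blast
      have "C \<subseteq> carrier K" unfolding a(2) using a(1) cK subgroup.subset[OF HK]
        by (intro K.r_coset_subset_G) auto
      then show "x \<in> M" using C cK by auto
    qed
    have HU: "H \<subseteq> U" unfolding U_def using HN by blast
    have inv: "inv\<^bsub>K\<^esub> x \<in> U" if x: "x \<in> U" for x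
    proof -
      obtain C where C: "C \<in> NN" "x \<in> C" using x unfolding U_def by blast
      have "inv\<^bsub>Q\<^esub> C \<in> NN" using subgroup.m_inv_closed[OF sN C(1)] .
      moreover have "inv\<^bsub>Q\<^esub> C = SET_INV K C" unfolding Q_def
        by (rule N.inv_FactGroup) (use C NQ in \<open>auto simp: Q_def\<close>)
      moreover have "inv\<^bsub>K\<^esub> x \<in> SET_INV K C" using C unfolding SET_INV_def by auto
      ultimately show ?thesis unfolding U_def by auto
    qed
    have mul: "x \<otimes>\<^bsub>K\<^esub> y \<in> U" if x: "x \<in> U" and y: "y \<in> U" for x y
    proof -
      obtain C where C: "C \<in> NN" "x \<in> C" using x unfolding U_def by blast
      obtain D where D: "D \<in> NN" "y \<in> D" using y unfolding U_def by blast
      have "C \<otimes>\<^bsub>Q\<^esub> D \<in> NN" using subgroup.m_closed[OF sN C(1) D(1)] .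
      moreover have "x \<otimes>\<^bsub>K\<^esub> y \<in> set_mult K C D" using C D unfolding set_mult_def by auto
      ultimately show ?thesis unfolding U_def mQ by auto
    qed
    have UG: "subgroup U G"
    proof (rule G.subgroupI)
      show "U \<subseteq> carrier G" using UM subgroup.subset[OF M] by blast
      show "U \<noteq> {}" using HU subgroup.one_closed[OF H] by blast
    next
      fix a assume a: "a \<in> U"
      then have "a \<in> M" using UM by blast
      then have "inv\<^bsub>K\<^esub> a = inv\<^bsub>G\<^esub> a" unfolding K_def by (rule G.m_inv_consistent[OF M])
      then show "inv\<^bsub>G\<^esub> a \<in> U" using inv[OF a] by simp
    next
      fix a b assume "a \<in> U" "b \<in> U"
      then show "a \<otimes>\<^bsub>G\<^esub> b \<in> U" using mul unfolding K_def by simp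
    qed
    show ?thesis
    proof (cases "U = H")
      case True
      have "NN \<subseteq> {H}"
      proof
        fix C assume C: "C \<in> NN"
        then obtain a where a: "a \<in> M" "C = r_coset K H a" using rc NQ by blast
        have "a \<in> C" unfolding a(2) using K.rcos_self[of a H] a(1) cK HK by simp
        then have "a \<in> H" using C True unfolding U_def by blast
        then have "C = H" unfolding a(2) using K.coset_join2[of a H] a(1) cK HK by simp
        then show "C \<in> {H}" by simp
      qed
      then have "NN = {\<one>\<^bsub>Q\<^esub>}" using HN oQ by auto
      then show ?thesis by simp
    next
      case False
      then have "U = M" using minimal[OF UG] HU UM by auto
      have "carrier Q \<subseteq> NN"
      proof
        fix C assume C: "C \<in> carrier Q"
        then obtain a where a: "a \<in> M" "C = r_coset K H a" using rc by blast
        then have "a \<in> U" using \<open>U = M\<close> by simp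
        then obtain C' where C': "C' \<in> NN" "a \<in> C'" unfolding U_def by blast
        then obtain b where b: "b \<in> M" "C' = r_coset K H b" using rc NQ by blast
        have "r_coset K H b = r_coset K H a"
          using K.repr_independence[of a H b] C'(2) b cK HK by simp
        then show "C \<in> NN" using a b C' by simp
      qed
      then show ?thesis using NQ by auto
    qed
  qed
  show "simple_group (G\<lparr>carrier := M\<rparr> Mod H)"
    unfolding K_def[symmetric] Q_def[symmetric]
  proof (rule simple_group.intro[OF grQ], rule simple_group_axioms.intro)
    show "1 < Coset.order Q" using oQ1 unfolding Coset.order_def .
    fix NN assume "NN \<lhd> Q" then show "NN = carrier Q \<or> NN = {\<one>\<^bsub>Q\<^esub>}" by (rule noreal)
  qed
qed


definition good_chain :: "('a, 'b) monoid_scheme \<Rightarrow> 'a set list \<Rightarrow> bool" where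
  "good_chain G Hs \<longleftrightarrow> Hs \<noteq> [] \<and> last Hs = carrier G \<and> (\<forall>H\<in>set Hs. subgroup H G) \<and>
     (\<forall>i. Suc i < length Hs \<longrightarrow>
        normal (Hs ! i) (G\<lparr>carrier := Hs ! Suc i\<rparr>) \<and>
        simple_group ((G\<lparr>carrier := Hs ! Suc i\<rparr>) Mod (Hs ! i)))"

lemma series_from:
  assumes Cm: "comm_group G" and F: "finite (carrier G)"
  shows "subgroup H G \<Longrightarrow> \<exists>Hs. good_chain G Hs \<and> hd Hs = H"
proof (induction "card (carrier G) - card H" arbitrary: H rule: less_induct)
  case less
  interpret G: comm_group G by (rule Cm)
  have HG: "H \<subseteq> carrier G" using subgroup.subset[OF less.prems] .
  show ?case
  proof (cases "H = carrier G")
    case True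
    have "good_chain G [H]" unfolding good_chain_def using True less.prems by simp
    then show ?thesis by (intro exI[of _ "[H]"]) simp
  next
    case False
    define SS where "SS = {M. subgroup M G \<and> H \<subset> M}"
    have cSS: "carrier G \<in> SS" unfolding SS_def using G.subgroup_self HG False by auto
    have "SS \<subseteq> Pow (carrier G)" unfolding SS_def using subgroup.subset by blast
    then have fSS: "finite SS" using F by (meson finite_Pow_iff finite_subset)
    define c where "c = Min (card ` SS)"
    have "c \<in> card ` SS" unfolding c_def using fSS cSS by (intro Min_in) auto
    then obtain M where M: "M \<in> SS" "card M = c" by blast
    have Mmin: "card M \<le> card M'" if "M' \<in> SS" for M'
      unfolding M(2) c_def using fSS that by (intro Min_le) auto
    have sM: "subgroup M G" and HM: "H \<subset> M" using M(1) unfolding SS_def by auto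
    have MG: "M \<subseteq> carrier G" using subgroup.subset[OF sM] .
    have fM: "finite M" using F MG finite_subset by blast
    have minimal: "U = M" if U: "subgroup U G" "H \<subset> U" "U \<subseteq> M" for U
    proof -
      have "U \<in> SS" unfolding SS_def using U by simp
      then have "card M \<le> card U" by (rule Mmin)
      then show "U = M" using U(3) fM by (metis card_subset_eq order_antisym card_mono)
    qed
    have NS: "H \<lhd> G\<lparr>carrier := M\<rparr>" "simple_group (G\<lparr>carrier := M\<rparr> Mod H)"
      using min_simple[OF Cm F less.prems sM HM minimal] by auto
    have "card H < card M" using HM fM by (rule psubset_card_mono[rotated])
    moreover have "card M \<le> card (carrier G)" using MG F by (rule card_mono[rotated])
    ultimately have "card (carrier G) - card M < card (carrier G) - card H" by linarith
    then obtain Hs' where Hs': "good_chain G Hs'" "hd Hs' = M" using less.hyps sM by blast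
    have ne: "Hs' \<noteq> []" using Hs'(1) unfolding good_chain_def by simp
    have "good_chain G (H # Hs')"
      unfolding good_chain_def
    proof (intro conjI allI impI)
      show "H # Hs' \<noteq> []" by simp
      show "last (H # Hs') = carrier G" using ne Hs'(1) unfolding good_chain_def by simp
      show "\<forall>H'\<in>set (H # Hs'). subgroup H' G" using Hs'(1) less.prems unfolding good_chain_def by simp
    next
      fix i assume i: "Suc i < length (H # Hs')"
      show "(H # Hs') ! i \<lhd> G\<lparr>carrier := (H # Hs') ! Suc i\<rparr>"
      proof (cases i)
        case 0
        then show ?thesis using NS(1) Hs'(2) ne by (simp add: hd_conv_nth)
      next
        case (Suc j)
        then show ?thesis using Hs'(1) i unfolding good_chain_def by simp
      qed
      show "simple_group (G\<lparr>carrier := (H # Hs') ! Suc i\<rparr> Mod (H # Hs') ! i)"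
      proof (cases i)
        case 0
        then show ?thesis using NS(2) Hs'(2) ne by (simp add: hd_conv_nth)
      next
        case (Suc j)
        then show ?thesis using Hs'(1) i unfolding good_chain_def by simp
      qed
    qed
    then show ?thesis by (intro exI[of _ "H # Hs'"]) simp
  qed
qed

lemma comp_length:
  assumes Cm: "comm_group G" and F: "finite (carrier G)"
  shows "composition_length G = Omega (card (carrier G))"
proof -
  interpret G: comm_group G by (rule Cm)
  obtain Hs where Hs: "good_chain G Hs" "hd Hs = {\<one>\<^bsub>G\<^esub>}"
    using series_from[OF Cm F G.triv_subgroup] by blast
  have cs: "composition_series G Hs" using Hs unfolding good_chain_def composition_series_def by blast
  show ?thesis
    unfolding composition_length_def
  proof (rule Least_equality)
    show "\<exists>Hs. composition_series G Hs \<and> length Hs = Suc (Omega (card (carrier G)))"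
      using cs series_length[OF Cm F cs] by blast
  next
    fix k assume "\<exists>Hs. composition_series G Hs \<and> length Hs = Suc k"
    then obtain Hs' where "composition_series G Hs'" "length Hs' = Suc k" by blast
    then show "Omega (card (carrier G)) \<le> k" using series_length[OF Cm F] by fastforce
  qed
qed


lemma stab_mult_closed:
  assumes d: "d \<in> stabset m n E" and d': "d' \<in> stabset m n E"
  shows "(\<lambda>i. d i * d' i) \<in> stabset m n E"
  using d d' unfolding stabset_def by (auto simp: prod.distrib power_mult_distrib)

lemma stab_inv_closed:
  assumes d: "d \<in> stabset m n E"
  shows "(\<lambda>i. inverse (d i)) \<in> stabset m n E"
proof -
  have "prod (\<lambda>k. inverse (d k)) A = inverse (prod d A)" for A
    using prod_inversef[of d A] by (simp add: comp_def)
  then show ?thesis using d unfolding stabset_def by (auto simp: power_inverse)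
qed

definition stab_grp :: "nat \<Rightarrow> nat \<Rightarrow> nat set set \<Rightarrow> (nat \<Rightarrow> complex) monoid" where
  "stab_grp m n E = \<lparr>carrier = stabset m n E, monoid.mult = (\<lambda>d d' i. d i * d' i), one = (\<lambda>_. 1)\<rparr>"

lemma stab_grp_comm: "comm_group (stab_grp m n E)"
proof (rule comm_groupI)
  fix x y assume "x \<in> carrier (stab_grp m n E)" "y \<in> carrier (stab_grp m n E)"
  then show "x \<otimes>\<^bsub>stab_grp m n E\<^esub> y \<in> carrier (stab_grp m n E)"
    unfolding stab_grp_def using stab_mult_closed by simp
next
  show "\<one>\<^bsub>stab_grp m n E\<^esub> \<in> carrier (stab_grp m n E)" unfolding stab_grp_def stabset_def by simp
next
  fix x y z show "x \<otimes>\<^bsub>stab_grp m n E\<^esub> y \<otimes>\<^bsub>stab_grp m n E\<^esub> z = x \<otimes>\<^bsub>stab_grp m n E\<^esub> (y \<otimes>\<^bsub>stab_grp m n E\<^esub> z)"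
    unfolding stab_grp_def by (simp add: mult.assoc)
next
  fix x y show "x \<otimes>\<^bsub>stab_grp m n E\<^esub> y = y \<otimes>\<^bsub>stab_grp m n E\<^esub> x"
    unfolding stab_grp_def by (simp add: mult.commute)
next
  fix x assume "x \<in> carrier (stab_grp m n E)"
  then show "\<one>\<^bsub>stab_grp m n E\<^esub> \<otimes>\<^bsub>stab_grp m n E\<^esub> x = x" unfolding stab_grp_def by simp
next
  fix x assume x: "x \<in> carrier (stab_grp m n E)"
  then have xs: "x \<in> stabset m n E" unfolding stab_grp_def by simp
  have "(\<lambda>i. inverse (x i)) \<in> carrier (stab_grp m n E)" unfolding stab_grp_def using stab_inv_closed[OF xs] by simp
  moreover have "(\<lambda>i. inverse (x i)) \<otimes>\<^bsub>stab_grp m n E\<^esub> x = \<one>\<^bsub>stab_grp m n E\<^esub>"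
  proof -
    have "inverse (x i) * x i = 1" for i
    proof (cases "i < n")
      case True then have "x i \<noteq> 0" using xs unfolding stabset_def by simp
      then show ?thesis by simp
    next
      case False then have "x i = 1" using xs unfolding stabset_def by simp
      then show ?thesis by simp
    qed
    then show ?thesis unfolding stab_grp_def by simp
  qed
  ultimately show "\<exists>y\<in>carrier (stab_grp m n E). y \<otimes>\<^bsub>stab_grp m n E\<^esub> x = \<one>\<^bsub>stab_grp m n E\<^esub>" by blast
qed

lemma stabset_mono: "EH \<subseteq> EG \<Longrightarrow> stabset m n EG \<subseteq> stabset m n EH"
  unfolding stabset_def by blast

lemma stab_dvd:
  assumes sub: "EH \<subseteq> EG" and fin: "finite (stabset m n EH)"
  shows "card (stabset m n EG) dvd card (stabset m n EH)"
proof -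
  interpret H: comm_group "stab_grp m n EH" by (rule stab_grp_comm)
  have eq: "stab_grp m n EH\<lparr>carrier := stabset m n EG\<rparr> = stab_grp m n EG" unfolding stab_grp_def by simp
  have "subgroup (stabset m n EG) (stab_grp m n EH)"
  proof (rule H.group_incl_imp_subgroup)
    show "stabset m n EG \<subseteq> carrier (stab_grp m n EH)" using stabset_mono[OF sub] unfolding stab_grp_def by simp
    show "group (stab_grp m n EH\<lparr>carrier := stabset m n EG\<rparr>)" unfolding eq
      using stab_grp_comm[of m n EG] by (simp add: comm_group_def)
  qed
  then have "card (rcosets\<^bsub>stab_grp m n EH\<^esub> stabset m n EG) * card (stabset m n EG) = Coset.order (stab_grp m n EH)"
    by (rule H.lagrange)
  then have "card (stabset m n EH) = card (rcosets\<^bsub>stab_grp m n EH\<^esub> stabset m n EG) * card (stabset m n EG)"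
    unfolding Coset.order_def stab_grp_def by simp
  then show ?thesis by simp
qed

context pf
begin

lemma module_comm: "comm_group (eigvec_module m n A)"
  and module_card: "card (carrier (eigvec_module m n A)) = card (stabset m n E)"
proof -
  define M where "M = eigvec_module m n A"
  have cM: "carrier M = phi ` stabset m n E" unfolding M_def eigvec_module_def rho_eq by simp
  have oM: "\<one>\<^bsub>M\<^esub> = phi (\<lambda>_. 1)" unfolding M_def eigvec_module_def pos_eq by simp
  have mM: "phi d \<otimes>\<^bsub>M\<^esub> phi d' = phi (\<lambda>i. d i * d' i)"
    if "d \<in> stabset m n E" "d' \<in> stabset m n E" for d d'
    unfolding M_def eigvec_module_def using module_mult[OF that] pos_eq by simp
  show "card (carrier (eigvec_module m n A)) = card (stabset m n E)"
    using cM phi_inj unfolding M_def by (simp add: card_image)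
  have "comm_group M"
  proof (rule comm_groupI)
    fix x y assume "x \<in> carrier M" "y \<in> carrier M"
    then obtain d d' where "d \<in> stabset m n E" "d' \<in> stabset m n E" "x = phi d" "y = phi d'" using cM by auto
    then show "x \<otimes>\<^bsub>M\<^esub> y \<in> carrier M" using mM stab_mult_closed cM by simp
  next
    show "\<one>\<^bsub>M\<^esub> \<in> carrier M" using oM cM one_stab by simp
  next
    fix x y z assume "x \<in> carrier M" "y \<in> carrier M" "z \<in> carrier M"
    then obtain d d' d'' where "d \<in> stabset m n E" "d' \<in> stabset m n E" "d'' \<in> stabset m n E"
      "x = phi d" "y = phi d'" "z = phi d''" using cM by auto
    then show "x \<otimes>\<^bsub>M\<^esub> y \<otimes>\<^bsub>M\<^esub> z = x \<otimes>\<^bsub>M\<^esub> (y \<otimes>\<^bsub>M\<^esub> z)"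
      using mM stab_mult_closed by (simp add: mult.assoc)
  next
    fix x y assume "x \<in> carrier M" "y \<in> carrier M"
    then obtain d d' where "d \<in> stabset m n E" "d' \<in> stabset m n E" "x = phi d" "y = phi d'" using cM by auto
    then show "x \<otimes>\<^bsub>M\<^esub> y = y \<otimes>\<^bsub>M\<^esub> x" using mM by (simp add: mult.commute)
  next
    fix x assume "x \<in> carrier M"
    then obtain d where "d \<in> stabset m n E" "x = phi d" using cM by auto
    then show "\<one>\<^bsub>M\<^esub> \<otimes>\<^bsub>M\<^esub> x = x" using mM oM one_stab by simp
  next
    fix x assume "x \<in> carrier M"
    then obtain d where d: "d \<in> stabset m n E" "x = phi d" using cM by auto
    define d' where "d' = (\<lambda>i. inverse (d i))"
    have d': "d' \<in> stabset m n E" unfolding d'_def by (rule stab_inv_closed[OF d(1)])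
    have "(\<lambda>i. d' i * d i) = (\<lambda>_. 1)"
    proof (rule ext)
      fix i show "d' i * d i = 1"
      proof (cases "i < n")
        case True then have "d i \<noteq> 0" using d unfolding stabset_def by simp
        then show ?thesis unfolding d'_def by simp
      next
        case False then have "d i = 1" using d unfolding stabset_def by simp
        then show ?thesis unfolding d'_def by simp
      qed
    qed
    then have "phi d' \<otimes>\<^bsub>M\<^esub> x = \<one>\<^bsub>M\<^esub>" using mM[OF d' d(1)] d(2) oM by simp
    moreover have "phi d' \<in> carrier M" using cM d' by simp
    ultimately show "\<exists>y\<in>carrier M. y \<otimes>\<^bsub>M\<^esub> x = \<one>\<^bsub>M\<^esub>" by blast
  qed
  then show "comm_group (eigvec_module m n A)" unfolding M_def .
qed

lemma stab_dim_eq: "hg_stab_dim m n E = Omega (card (stabset m n E))"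
proof -
  have fin: "finite (stabset m n E)" by (rule stabset_finite[OF U C n1 m2])
  have "finite (carrier (eigvec_module m n A))"
    unfolding eigvec_module_def rho_eq using fin by simp
  then show ?thesis
    unfolding hg_stab_dim_def stabilizing_dimension_def
    using comp_length[OF module_comm] module_card by simp
qed

end

theorem theorem4p6:
  fixes m n :: nat and EG EH :: "nat set set"
  assumes "m \<ge> 2" and "n \<ge> 1"
    and "uniform_hypergraph m n EG" and "hg_connected n EG"
    and "EH \<subseteq> EG" and "hg_connected n EH"
  shows "hg_stab_index m n EG dvd hg_stab_index m n EH \<and>
         hg_stab_dim m n EG \<le> hg_stab_dim m n EH"
proof -
  have UH: "uniform_hypergraph m n EH" using assms(3,5) unfolding uniform_hypergraph_def by blast
  obtain vG :: "nat \<Rightarrow> real" and rG where G: "(\<forall>i<n. 0 < vG i) \<and> (\<forall>i\<ge>n. vG i = 0) \<and> vG 0 = 1 \<and> rG \<ge> 0 \<and>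
     (\<forall>i<n. nbr EG vG i = rG * vG i ^ (m - 1))"
    using perron_real[OF assms(3) assms(4) assms(1) assms(2)] by blast
  obtain vH :: "nat \<Rightarrow> real" and rH where H: "(\<forall>i<n. 0 < vH i) \<and> (\<forall>i\<ge>n. vH i = 0) \<and> vH 0 = 1 \<and> rH \<ge> 0 \<and>
     (\<forall>i<n. nbr EH vH i = rH * vH i ^ (m - 1))"
    using perron_real[OF UH assms(6) assms(1) assms(2)] by blast
  interpret pG: pf m n EG vG rG using G assms by unfold_locales auto
  interpret pH: pf m n EH vH rH using H assms UH by unfold_locales auto
  have fH: "finite (stabset m n EH)" by (rule stabset_finite[OF UH assms(6) assms(2) assms(1)])
  have fG: "finite (stabset m n EG)" by (rule stabset_finite[OF assms(3) assms(4) assms(2) assms(1)])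
  have dv: "card (stabset m n EG) dvd card (stabset m n EH)" by (rule stab_dvd[OF assms(5) fH])
  have p1: "hg_stab_index m n EG dvd hg_stab_index m n EH"
    using dv hg_stab_index_eq[OF assms(3) assms(1)] hg_stab_index_eq[OF UH assms(1)] by simp
  have nzG: "card (stabset m n EG) \<noteq> 0" using fG pG.one_stab by auto
  have nzH: "card (stabset m n EH) \<noteq> 0" using fH pH.one_stab by auto
  have "prime_factorization (card (stabset m n EG)) \<subseteq># prime_factorization (card (stabset m n EH))"
    using prime_factorization_subset_iff_dvd[OF nzG nzH] dv by simp
  then have "Omega (card (stabset m n EG)) \<le> Omega (card (stabset m n EH))"
    unfolding Omega_def by (rule size_mset_mono)
  then have p2: "hg_stab_dim m n EG \<le> hg_stab_dim m n EH"
    using pG.stab_dim_eq pH.stab_dim_eq by simp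
  show ?thesis using p1 p2 by blast
qed


end
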